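(* For every condition $(\tau,Q,a)$ and every c.e. set $D\subseteq\omega\times\omega$ with $\mathrm{wt}(D)<\infty$, there exists a condition $(\tau,Q',a')$ (with the same first component $\tau$) extending $(\tau,Q,a)$ such that $D\subseteq^* Y$ (i.e. $D\setminus Y$ is finite) for every $Y$ in the set of candidates $(\tau,Q',a')$.
   Context: Fix a computable bijection between $\omega\times\omega$ and $\omega$, so that subsets of $\omega\times\omega$ are identified with elements of $2^\omega$ and strings $\rho\in 2^{<\omega}$ with finite subsets of $\omega\times\omega$; thus $X\upharpoonright_n$, $\rho\supseteq\sigma$, $\rho\setminus X$ etc. make sense. For $X\subseteq\omega\times\omega$, $\mathrm{wt}(X)=\sum_{(n,m)\in X}2^{-n}$; for a class $\hat Q\subseteq 2^\omega$, $\mathrm{wt}(\hat Q)=\inf_{X\in\hat Q}\mathrm{wt}(X)$, and $\mathrm{wt}(\emptyset)=\infty$. A condition is a tuple $(\tau,Q,a)$ where $\tau\in 2^{<\omega}$, $Q\subseteq 2^\omega$ is a $\Pi^0_1$ class with $\mathrm{wt}(Q)<\infty$, $a$ is a computable real, and for every $X\in Q$, $\tau\supseteq X\upharpoonright_{|\tau|}$ (as sets) and $\mathrm{wt}(\tau\setminus X)<a$. The condition $(\tau,Q,a)$ also denotes its set of candidates $\{Y\in 2^\omega: Y\succ\tau,\ \exists X\in Q\ (Y\supseteq X\text{ and }\mathrm{wt}(Y\setminus X)\le a)\}$. A condition $(\tau',Q',a')$ extends $(\tau,Q,a)$ if $(\tau',Q',a')\subseteq(\tau,Q,a)$ as sets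 of candidates. *)

theory Defs
  imports Complex_Main "HOL-Library.Nat_Bijection" "HOL-Library.Extended_Nonnegative_Real"
begin

datatype recf = Zero | Succ | Proj nat | Comp recf "recf list" | Prec recf recf | Minim recf

inductive evalr :: "recf \<Rightarrow> nat list \<Rightarrow> nat \<Rightarrow> bool" where
  ev_zero: "evalr Zero xs 0"
| ev_succ: "evalr Succ (x # xs) (Suc x)"
| ev_proj: "i < length xs \<Longrightarrow> evalr (Proj i) xs (xs ! i)"
| ev_comp: "list_all2 (\<lambda>g y. evalr g xs y) gs ys \<Longrightarrow> evalr f ys z \<Longrightarrow> evalr (Comp f gs) xs z"
| ev_prec0: "evalr f xs y \<Longrightarrow> evalr (Prec f g) (0 # xs) y"
| ev_precS: "evalr (Prec f g) (n # xs) y \<Longrightarrow> evalr g (y # n # xs) z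
             \<Longrightarrow> evalr (Prec f g) (Suc n # xs) z"
| ev_minim: "evalr f (y # xs) 0 \<Longrightarrow> (\<forall>k<y. \<exists>v. evalr f (k # xs) v \<and> 0 < v)
             \<Longrightarrow> evalr (Minim f) xs y"

definition computable :: "(nat \<Rightarrow> nat) \<Rightarrow> bool" where
  "computable f \<longleftrightarrow> (\<exists>p. \<forall>n. evalr p [n] (f n))"

definition ce :: "nat set \<Rightarrow> bool" where
  "ce A \<longleftrightarrow> (\<exists>p. \<forall>n. n \<in> A \<longleftrightarrow> (\<exists>v. evalr p [n] v))"

definition decidable_set :: "nat set \<Rightarrow> bool" where
  "decidable_set R \<longleftrightarrow> computable (\<lambda>k. if k \<in> R then 1 else 0)"

text \<open>Elements of 2^omega are sets of naturals; strings are bool lists.\<close>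
definition prefix_of :: "nat set \<Rightarrow> nat \<Rightarrow> bool list" where
  "prefix_of X n = map (\<lambda>i. i \<in> X) [0..<n]"

text \<open>Injective coding of binary strings by naturals (binary with a leading 1).\<close>
definition str_code :: "bool list \<Rightarrow> nat" where
  "str_code bs = foldr (\<lambda>b acc. (if b then 1 else 0) + 2 * acc) bs 1"

definition Pi01_class :: "nat set set \<Rightarrow> bool" where
  "Pi01_class Q \<longleftrightarrow> (\<exists>R. decidable_set R \<and> Q = {X. \<forall>n. str_code (prefix_of X n) \<in> R})"

definition computable_real :: "real \<Rightarrow> bool" where
  "computable_real a \<longleftrightarrow> (\<exists>f g h. computable f \<and> computable g \<and> computable h \<and>
     (\<forall>n. \<bar>a - (real (f n) - real (g n)) / real (h n + 1)\<bar> \<le> 1 / 2 ^ n))"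

definition strset :: "bool list \<Rightarrow> nat set" where
  "strset \<tau> = {i. i < length \<tau> \<and> \<tau> ! i}"

definition extends_str :: "nat set \<Rightarrow> bool list \<Rightarrow> bool" where
  "extends_str Y \<tau> \<longleftrightarrow> (\<forall>i<length \<tau>. (i \<in> Y) = \<tau> ! i)"

text \<open>The fixed computable bijection omega x omega -> omega is Cantor pairing
  prod_encode; the code k stands for the pair prod_decode k = (n,m).\<close>
definition wt :: "nat set \<Rightarrow> ennreal" where
  "wt X = (\<Sum>k. if k \<in> X then ennreal ((1/2) ^ fst (prod_decode k)) else 0)"

definition wt_class :: "nat set set \<Rightarrow> ennreal" where
  "wt_class Q = (INF X\<in>Q. wt X)"

definition is_condition :: "bool list \<Rightarrow> nat set set \<Rightarrow> real \<Rightarrow> bool" where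
  "is_condition \<tau> Q a \<longleftrightarrow> Pi01_class Q \<and> wt_class Q < \<infinity> \<and> computable_real a \<and>
     (\<forall>X\<in>Q. X \<inter> {..<length \<tau>} \<subseteq> strset \<tau> \<and> enn2ereal (wt (strset \<tau> - X)) < ereal a)"

definition candidates :: "bool list \<Rightarrow> nat set set \<Rightarrow> real \<Rightarrow> nat set set" where
  "candidates \<tau> Q a = {Y. extends_str Y \<tau> \<and>
     (\<exists>X\<in>Q. X \<subseteq> Y \<and> enn2ereal (wt (Y - X)) \<le> ereal a)}"

end

theory Submission
  imports Defs
begin
definition prc :: "nat \<Rightarrow> (nat list \<Rightarrow> nat) \<Rightarrow> bool" where
  "prc k f \<longleftrightarrow> (\<exists>p. \<forall>xs. length xs = k \<longrightarrow> evalr p xs (f xs))"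

lemma prc_cong: "prc k f \<Longrightarrow> (\<And>xs. length xs = k \<Longrightarrow> f xs = g xs) \<Longrightarrow> prc k g"
  unfolding prc_def by metis

lemma prc_zero: "prc k (\<lambda>_. 0)"
  unfolding prc_def by (auto intro: evalr.intros)

lemma prc_nth: "j < k \<Longrightarrow> prc k (\<lambda>xs. xs ! j)"
  unfolding prc_def by (rule exI[of _ "Proj j"]) (auto intro: evalr.intros)

lemma progs_exist:
  assumes "\<forall>g\<in>set gs. prc k g"
  shows "\<exists>ps. \<forall>xs. length xs = k \<longrightarrow> list_all2 (\<lambda>p y. evalr p xs y) ps (map (\<lambda>g. g xs) gs)"
  using assms
proof (induction gs)
  case Nil then show ?case by auto
next
  case (Cons g gs)
  then obtain ps where ps: "\<forall>xs. length xs = k \<longrightarrow> list_all2 (\<lambda>p y. evalr p xs y) ps (map (\<lambda>g. g xs) gs)" by auto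
  from Cons.prems obtain q where q: "\<forall>xs. length xs = k \<longrightarrow> evalr q xs (g xs)" unfolding prc_def by auto
  show ?case by (rule exI[of _ "q # ps"]) (simp add: ps q)
qed

lemma prc_comp:
  assumes "prc m f" "\<forall>g\<in>set gs. prc k g" "length gs = m"
  shows "prc k (\<lambda>xs. f (map (\<lambda>g. g xs) gs))"
proof -
  obtain ps where ps: "\<forall>xs. length xs = k \<longrightarrow> list_all2 (\<lambda>p y. evalr p xs y) ps (map (\<lambda>g. g xs) gs)"
    using progs_exist[OF assms(2)] by auto
  obtain q where q: "\<forall>xs. length xs = m \<longrightarrow> evalr q xs (f xs)" using assms(1) unfolding prc_def by auto
  show ?thesis unfolding prc_def
  proof (rule exI[of _ "Comp q ps"], intro allI impI)
    fix xs :: "nat list" assume "length xs = k"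
    then show "evalr (Comp q ps) xs (f (map (\<lambda>g. g xs) gs))"
      using ps q assms(3) by (intro evalr.ev_comp[where ys="map (\<lambda>g. g xs) gs"]) auto
  qed
qed

lemma prc_succ: "prc k f \<Longrightarrow> prc k (\<lambda>xs. Suc (f xs))"
proof -
  assume "prc k f"
  have "prc 1 (\<lambda>xs. Suc (hd xs))" unfolding prc_def
    apply (rule exI[of _ Succ]) apply clarify
    apply (case_tac xs) apply auto
    by (metis evalr.ev_succ length_0_conv)
  from prc_comp[OF this, of "[f]"] \<open>prc k f\<close> show ?thesis by simp
qed

lemma prc_prec:
  assumes "prc k f" "prc (Suc (Suc k)) g"
  shows "prc (Suc k) (\<lambda>xs. rec_nat (f (tl xs)) (\<lambda>n y. g (y # n # tl xs)) (hd xs))"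
proof -
  obtain p where p: "\<forall>xs. length xs = k \<longrightarrow> evalr p xs (f xs)" using assms(1) unfolding prc_def by auto
  obtain q where q: "\<forall>xs. length xs = Suc (Suc k) \<longrightarrow> evalr q xs (g xs)" using assms(2) unfolding prc_def by auto
  have *: "evalr (Prec p q) (n # ys) (rec_nat (f ys) (\<lambda>n y. g (y # n # ys)) n)" if "length ys = k" for n ys
  proof (induction n)
    case 0 then show ?case using p that by (auto intro: evalr.intros)
  next
    case (Suc n) then show ?case using q that by (auto intro: evalr.intros)
  qed
  show ?thesis unfolding prc_def
    apply (rule exI[of _ "Prec p q"]) apply clarify
    apply (case_tac xs) using * by auto
qed

definition prcl :: "nat \<Rightarrow> nat \<Rightarrow> (nat list \<Rightarrow> nat list) \<Rightarrow> bool" where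
  "prcl k m F \<longleftrightarrow> (\<forall>xs. length xs = k \<longrightarrow> length (F xs) = m) \<and> (\<forall>j<m. prc k (\<lambda>xs. F xs ! j))"

lemma prc_compl: assumes "prc m f" "prcl k m F" shows "prc k (\<lambda>xs. f (F xs))"
proof -
  have "prc k (\<lambda>xs. f (map (\<lambda>g. g xs) (map (\<lambda>j xs. F xs ! j) [0..<m])))"
    using assms by (intro prc_comp) (auto simp: prcl_def)
  then show ?thesis
  proof (rule prc_cong)
    fix xs :: "nat list" assume "length xs = k"
    then have "length (F xs) = m" using assms(2) by (auto simp: prcl_def)
    then show "f (map (\<lambda>g. g xs) (map (\<lambda>j xs. F xs ! j) [0..<m])) = f (F xs)"
      by (simp add: map_nth[symmetric] comp_def) (metis map_nth)
  qed
qed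

lemma prcl_id: "prcl k k (\<lambda>xs. xs)"
  unfolding prcl_def by (auto intro: prc_nth)

lemma prcl_nil: "prcl k 0 (\<lambda>_. [])"
  unfolding prcl_def by auto

lemma prcl_cons: "prc k g \<Longrightarrow> prcl k m F \<Longrightarrow> prcl k (Suc m) (\<lambda>xs. g xs # F xs)"
  unfolding prcl_def
proof (intro conjI allI impI)
  fix j assume a: "prc k g" "(\<forall>xs. length xs = k \<longrightarrow> length (F xs) = m) \<and> (\<forall>j<m. prc k (\<lambda>xs. F xs ! j))" "j < Suc m"
  show "prc k (\<lambda>xs. (g xs # F xs) ! j)"
  proof (cases j)
    case 0 then show ?thesis using a by simp
  next
    case (Suc j') then show ?thesis using a by simp
  qed
qed (auto)

lemma prcl_tl: "prcl k (Suc m) F \<Longrightarrow> prcl k m (\<lambda>xs. tl (F xs))"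
  unfolding prcl_def
proof (intro conjI allI impI)
  fix j assume a: "(\<forall>xs. length xs = k \<longrightarrow> length (F xs) = Suc m) \<and> (\<forall>j<Suc m. prc k (\<lambda>xs. F xs ! j))" "j < m"
  then have "prc k (\<lambda>xs. F xs ! Suc j)" by auto
  then show "prc k (\<lambda>xs. tl (F xs) ! j)"
    by (rule prc_cong) (use a in \<open>auto simp: nth_tl\<close>)
qed (auto)

lemma prc_nthl: "prcl k m F \<Longrightarrow> j < m \<Longrightarrow> prc k (\<lambda>xs. F xs ! j)"
  unfolding prcl_def by auto

lemma prc_hdl: "prcl k (Suc m) F \<Longrightarrow> prc k (\<lambda>xs. hd (F xs))"
  unfolding prcl_def
  by (rule prc_cong[of _ "\<lambda>xs. F xs ! 0"]) (auto, metis hd_conv_nth list.size(3) nat.distinct(1))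

lemma prc_const: "prc k (\<lambda>_. c)"
  by (induction c) (auto intro: prc_zero prc_succ)

lemma prc_op1: "prc 1 (\<lambda>ys. h (ys ! 0)) \<Longrightarrow> prc k f \<Longrightarrow> prc k (\<lambda>xs. h (f xs))"
  using prc_compl[of 1 "\<lambda>ys. h (ys ! 0)" k "\<lambda>xs. [f xs]"]
  by (simp add: prcl_cons prcl_nil)

lemma prc_op2: "prc 2 (\<lambda>ys. h (ys ! 0) (ys ! 1)) \<Longrightarrow> prc k f \<Longrightarrow> prc k g \<Longrightarrow> prc k (\<lambda>xs. h (f xs) (g xs))"
  using prc_compl[of 2 "\<lambda>ys. h (ys ! 0) (ys ! 1)" k "\<lambda>xs. [f xs, g xs]"]
  by (simp add: prcl_cons prcl_nil numeral_2_eq_2)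

lemma len1: "length xs = Suc 0 \<Longrightarrow> \<exists>a. xs = [a]"
  by (cases xs) auto
lemma len2: "length xs = 2 \<Longrightarrow> \<exists>a b. xs = [a, b]"
  by (cases xs; cases "tl xs") (auto simp: numeral_2_eq_2)

lemma prec1: assumes "prc 0 f" "prc 2 g" shows "prc 1 (\<lambda>xs. rec_nat (f []) (\<lambda>n y. g [y, n]) (xs ! 0))"
proof -
  have "prc 1 (\<lambda>xs. rec_nat (f (tl xs)) (\<lambda>n y. g (y # n # tl xs)) (hd xs))"
    using prc_prec[of 0 f g] assms by (simp add: numeral_2_eq_2)
  then show ?thesis
  proof (rule prc_cong)
    fix xs :: "nat list" assume "length xs = 1"
    then obtain a where "xs = [a]" using len1 by auto
    then show "rec_nat (f (tl xs)) (\<lambda>n y. g (y # n # tl xs)) (hd xs) = rec_nat (f []) (\<lambda>n y. g [y, n]) (xs ! 0)" by simp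
  qed
qed

lemma prec2: assumes "prc 1 f" "prc 3 g" shows "prc 2 (\<lambda>xs. rec_nat (f [xs!1]) (\<lambda>n y. g [y, n, xs!1]) (xs ! 0))"
proof -
  have "prc 2 (\<lambda>xs. rec_nat (f (tl xs)) (\<lambda>n y. g (y # n # tl xs)) (hd xs))"
    using prc_prec[of 1 f g] assms by (simp add: numeral_3_eq_3 numeral_2_eq_2)
  then show ?thesis
  proof (rule prc_cong)
    fix xs :: "nat list" assume "length xs = 2"
    then obtain a b where "xs = [a, b]" using len2 by blast
    then show "rec_nat (f (tl xs)) (\<lambda>n y. g (y # n # tl xs)) (hd xs) = rec_nat (f [xs!1]) (\<lambda>n y. g [y, n, xs!1]) (xs ! 0)" by simp
  qed
qed

lemma rec_add: "rec_nat b (\<lambda>n y. Suc y) a = a + (b::nat)" by (induction a) auto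
lemma rec_mult: "rec_nat 0 (\<lambda>n y. y + b) a = a * (b::nat)" by (induction a) auto
lemma rec_pred: "rec_nat 0 (\<lambda>n y. n) a = a - (1::nat)" by (induction a) auto
lemma rec_monus: "rec_nat b (\<lambda>n y. y - Suc 0) a = b - (a::nat)" by (induction a) auto
lemma rec_pow: "rec_nat (Suc 0) (\<lambda>n y. y + y) a = (2::nat) ^ a" by (induction a) auto
lemma rec_tri: "rec_nat 0 (\<lambda>n y. Suc (y + n)) a = triangle a" by (induction a) auto
lemma rec_sg: "0 < a \<Longrightarrow> rec_nat 0 (\<lambda>n y. Suc 0) a = Suc 0" by (cases a) auto
lemma rec_mod: "rec_nat 0 (\<lambda>n y. if Suc y = m then 0 else Suc y) a = a mod (m::nat)"
  by (induction a) (auto simp: mod_Suc)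
lemma rec_sum: "rec_nat 0 (\<lambda>n y. y + h n) m = (\<Sum>i<m. h i :: nat)" by (induction m) auto

lemma base_add: "prc 2 (\<lambda>ys. ys ! 0 + ys ! 1)"
  using prec2[OF prc_nth[of 0 1] prc_succ[OF prc_nth[of 0 3]]]
  by (rule prc_cong) (auto simp: rec_add dest!: len2)

lemma prc_add: "prc k f \<Longrightarrow> prc k g \<Longrightarrow> prc k (\<lambda>xs. f xs + g xs)"
  by (rule prc_op2[OF base_add])

lemma base_mult: "prc 2 (\<lambda>ys. ys ! 0 * ys ! 1)"
  using prec2[OF prc_zero prc_add[OF prc_nth[of 0 3] prc_nth[of 2 3]]]
  by (rule prc_cong) (auto simp: rec_mult dest!: len2)

lemma prc_mult: "prc k f \<Longrightarrow> prc k g \<Longrightarrow> prc k (\<lambda>xs. f xs * g xs)"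
  by (rule prc_op2[OF base_mult])

lemma base_pred: "prc 1 (\<lambda>ys. ys ! 0 - 1)"
  using prec1[OF prc_zero prc_nth[of 1 2]]
  by (rule prc_cong) (auto simp: rec_pred dest!: len1)

lemma base_monus': "prc 2 (\<lambda>ys. ys ! 1 - ys ! 0)"
  using prec2[OF prc_nth[of 0 1] prc_op1[OF base_pred prc_nth[of 0 3]]]
  by (rule prc_cong) (auto simp: rec_monus dest!: len2)

lemma prc_monus: "prc k f \<Longrightarrow> prc k g \<Longrightarrow> prc k (\<lambda>xs. f xs - g xs)"
  using prc_op2[OF base_monus', of k g f] by simp

lemma base_pow: "prc 1 (\<lambda>ys. 2 ^ (ys ! 0))"
  using prec1[OF prc_const[of 0 1] prc_add[OF prc_nth[of 0 2] prc_nth[of 0 2]]]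
  by (rule prc_cong) (auto simp: rec_pow dest!: len1)

lemma prc_pow: "prc k f \<Longrightarrow> prc k (\<lambda>xs. 2 ^ f xs)"
  by (rule prc_op1[OF base_pow])

lemma base_tri: "prc 1 (\<lambda>ys. triangle (ys ! 0))"
  using prec1[OF prc_zero prc_add[OF prc_nth[of 0 2] prc_succ[OF prc_nth[of 1 2]]]]
  by (rule prc_cong) (auto simp: rec_tri dest!: len1)

lemma prc_tri: "prc k f \<Longrightarrow> prc k (\<lambda>xs. triangle (f xs))"
  by (rule prc_op1[OF base_tri])

definition ind :: "bool \<Rightarrow> nat" where "ind P = (if P then 1 else 0)"

lemma base_sg: "prc 1 (\<lambda>ys. ind (0 < ys ! 0))"
  using prec1[OF prc_zero prc_const[of 2 1]]
  by (rule prc_cong) (auto simp: rec_sg ind_def dest!: len1)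

lemma prc_sg: "prc k f \<Longrightarrow> prc k (\<lambda>xs. ind (0 < f xs))"
  by (rule prc_op1[OF base_sg])

lemma prc_ind_le: "prc k f \<Longrightarrow> prc k g \<Longrightarrow> prc k (\<lambda>xs. ind (f xs \<le> g xs))"
proof -
  assume "prc k f" "prc k g"
  then have "prc k (\<lambda>xs. 1 - ind (0 < f xs - g xs))" by (intro prc_monus prc_const prc_sg)
  then show ?thesis by (rule prc_cong) (auto simp: ind_def)
qed

lemma prc_ind_less: "prc k f \<Longrightarrow> prc k g \<Longrightarrow> prc k (\<lambda>xs. ind (f xs < g xs))"
  using prc_ind_le[of k "\<lambda>xs. Suc (f xs)" g] prc_succ by (simp add: Suc_le_eq)

lemma prc_ind_and: "prc k (\<lambda>xs. ind (P xs)) \<Longrightarrow> prc k (\<lambda>xs. ind (Q xs)) \<Longrightarrow> prc k (\<lambda>xs. ind (P xs \<and> Q xs))"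
  by (drule (1) prc_mult) (rule prc_cong, assumption, simp add: ind_def)

lemma prc_ind_not: "prc k (\<lambda>xs. ind (P xs)) \<Longrightarrow> prc k (\<lambda>xs. ind (\<not> P xs))"
  by (drule prc_monus[OF prc_const[of k 1]]) (rule prc_cong, assumption, simp add: ind_def)

lemma prc_ind_or: "prc k (\<lambda>xs. ind (P xs)) \<Longrightarrow> prc k (\<lambda>xs. ind (Q xs)) \<Longrightarrow> prc k (\<lambda>xs. ind (P xs \<or> Q xs))"
  by (drule (1) prc_add, drule prc_sg) (rule prc_cong, assumption, simp add: ind_def)

lemma prc_ind_imp: "prc k (\<lambda>xs. ind (P xs)) \<Longrightarrow> prc k (\<lambda>xs. ind (Q xs)) \<Longrightarrow> prc k (\<lambda>xs. ind (P xs \<longrightarrow> Q xs))"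
  by (drule prc_ind_not, drule (1) prc_ind_or) (rule prc_cong, assumption, simp)

lemma prc_ind_eq: assumes "prc k f" "prc k g" shows "prc k (\<lambda>xs. ind (f xs = g xs))"
proof -
  have "prc k (\<lambda>xs. ind (f xs \<le> g xs \<and> g xs \<le> f xs))"
    by (intro prc_ind_and prc_ind_le assms)
  then show ?thesis by (rule prc_cong) (auto simp: ind_def)
qed

lemma prc_if: "prc k (\<lambda>xs. ind (P xs)) \<Longrightarrow> prc k f \<Longrightarrow> prc k g \<Longrightarrow> prc k (\<lambda>xs. if P xs then f xs else g xs)"
proof -
  assume a: "prc k (\<lambda>xs. ind (P xs))" "prc k f" "prc k g"
  have "prc k (\<lambda>xs. ind (P xs) * f xs + (1 - ind (P xs)) * g xs)"
    using a by (intro prc_add prc_mult prc_monus prc_const)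
  then show ?thesis by (rule prc_cong) (auto simp: ind_def)
qed

lemma base_mod: "prc 2 (\<lambda>ys. ys ! 0 mod ys ! 1)"
proof -
  have "prc 3 (\<lambda>zs. if Suc (zs ! 0) = zs ! 2 then 0 else Suc (zs ! 0))"
    by (intro prc_if prc_ind_eq prc_succ prc_nth prc_const) auto
  from prec2[OF prc_zero this] show ?thesis
    by (rule prc_cong) (auto simp: rec_mod dest!: len2 cong: if_cong)
qed

lemma prc_mod: "prc k f \<Longrightarrow> prc k g \<Longrightarrow> prc k (\<lambda>xs. f xs mod g xs)"
  by (rule prc_op2[OF base_mod])

lemma prc_sum: assumes "prc k b" "prc (Suc k) (\<lambda>ys. f (hd ys) (tl ys))"
  shows "prc k (\<lambda>xs. \<Sum>i<b xs. f i xs)"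
proof -
  have "prc (Suc (Suc k)) (\<lambda>zs. hd zs + (\<lambda>ys. f (hd ys) (tl ys)) (tl zs))"
    by (intro prc_add prc_hdl[OF prcl_id] prc_compl[OF assms(2)] prcl_tl prcl_id)
  from prc_prec[OF prc_zero this]
  have "prc (Suc k) (\<lambda>xs. \<Sum>i<hd xs. f i (tl xs))"
    by (simp add: rec_sum)
  from prc_compl[OF this prcl_cons[OF assms(1) prcl_id]] show ?thesis by simp
qed

lemma prc_ind_ex: assumes "prc k b" "prc (Suc k) (\<lambda>ys. ind (P (hd ys) (tl ys)))"
  shows "prc k (\<lambda>xs. ind (\<exists>i<b xs. P i xs))"
proof -
  have "prc k (\<lambda>xs. ind (0 < (\<Sum>i<b xs. ind (P i xs))))"
    by (intro prc_sg prc_sum assms)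
  then show ?thesis by (rule prc_cong) (auto simp: ind_def)
qed

lemma prc_ind_all: assumes "prc k b" "prc (Suc k) (\<lambda>ys. ind (P (hd ys) (tl ys)))"
  shows "prc k (\<lambda>xs. ind (\<forall>i<b xs. P i xs))"
proof -
  have "prc k (\<lambda>xs. ind (\<not> (\<exists>i<b xs. \<not> P i xs)))"
    by (intro prc_ind_not prc_ind_ex assms prc_ind_not)
  then show ?thesis by (rule prc_cong) auto
qed

lemma computable_prc: "computable f \<longleftrightarrow> prc 1 (\<lambda>xs. f (hd xs))"
  unfolding computable_def prc_def
  by (metis One_nat_def len1 list.sel(1) list.size(3) list.size(4) add_0)

lemma prc_ind_mem: "decidable_set R \<Longrightarrow> prc k f \<Longrightarrow> prc k (\<lambda>xs. ind (f xs \<in> R))"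
  unfolding decidable_set_def computable_prc
  by (drule prc_compl[of 1 _ k "\<lambda>xs. [f xs]"]) (auto simp: prcl_cons prcl_nil ind_def)

lemmas prc_rules = prc_const prc_add prc_mult prc_monus prc_pow prc_tri prc_mod prc_succ
  prc_ind_le prc_ind_less prc_ind_eq prc_ind_and prc_ind_not prc_ind_or prc_ind_imp prc_if
  prc_sum prc_ind_ex prc_ind_all prc_sg prc_hdl prc_nthl prcl_tl prcl_id prcl_cons prcl_nil

fun clk :: "recf \<Rightarrow> nat \<Rightarrow> nat list \<Rightarrow> nat option" where
  "clk Zero s xs = Some 0"
| "clk Succ s xs = (case xs of [] \<Rightarrow> None | x # _ \<Rightarrow> Some (Suc x))"
| "clk (Proj i) s xs = (if i < length xs then Some (xs ! i) else None)"
| "clk (Comp f gs) s xs = (if (\<forall>g\<in>set gs. clk g s xs \<noteq> None)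
      then clk f s (map (\<lambda>g. the (clk g s xs)) gs) else None)"
| "clk (Prec f g) s xs = (case xs of [] \<Rightarrow> None | n # ys \<Rightarrow>
      rec_nat (clk f s ys) (\<lambda>k r. case r of None \<Rightarrow> None | Some y \<Rightarrow> clk g s (y # k # ys)) n)"
| "clk (Minim f) s xs = (if \<exists>y<s. clk f s (y # xs) = Some 0 \<and> (\<forall>j<y. \<exists>v. clk f s (j # xs) = Some (Suc v))
      then Some (LEAST y. clk f s (y # xs) = Some 0 \<and> (\<forall>j<y. \<exists>v. clk f s (j # xs) = Some (Suc v))) else None)"

lemma mok_unique:
  fixes F :: "nat \<Rightarrow> nat option"
  assumes "F y1 = Some (0::nat) \<and> (\<forall>j<y1. \<exists>v. F j = Some (Suc v))"
    "F y2 = Some 0 \<and> (\<forall>j<y2. \<exists>v. F j = Some (Suc v))"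
  shows "y1 = y2"
proof (rule ccontr)
  assume "y1 \<noteq> y2"
  then consider "y1 < y2" | "y2 < y1" using nat_neq_iff by blast
  then show False
  proof cases
    case 1 then obtain v where "F y1 = Some (Suc v)" using assms(2) by blast
    then show False using assms(1) by simp
  next
    case 2 then obtain v where "F y2 = Some (Suc v)" using assms(1) by blast
    then show False using assms(2) by simp
  qed
qed

lemma mok_least:
  fixes F :: "nat \<Rightarrow> nat option"
  assumes "F y1 = Some (0::nat) \<and> (\<forall>j<y1. \<exists>v. F j = Some (Suc v))"
  shows "(LEAST y. F y = Some 0 \<and> (\<forall>j<y. \<exists>v. F j = Some (Suc v))) = y1"
proof (rule Least_equality[where P="\<lambda>y. F y = Some 0 \<and> (\<forall>j<y. \<exists>v. F j = Some (Suc v))"])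
  show "F y1 = Some 0 \<and> (\<forall>j<y1. \<exists>v. F j = Some (Suc v))" by (rule assms)
  fix y assume "F y = Some 0 \<and> (\<forall>j<y. \<exists>v. F j = Some (Suc v))"
  then have "y = y1" using mok_unique[OF _ assms] by blast
  then show "y1 \<le> y" by simp
qed

lemma clk_mono: "clk p s xs = Some v \<Longrightarrow> s \<le> s' \<Longrightarrow> clk p s' xs = Some v"
proof (induction p arbitrary: xs v)
  case Zero then show ?case by simp
next
  case Succ then show ?case by simp
next
  case (Proj i) then show ?case by simp
next
  case (Comp f gs)
  have all: "\<forall>g\<in>set gs. clk g s xs \<noteq> None"
  proof (rule ccontr)
    assume "\<not> (\<forall>g\<in>set gs. clk g s xs \<noteq> None)"
    then have "clk (Comp f gs) s xs = None" by (simp only: clk.simps if_False)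
    with Comp.prems show False by simp
  qed
  have same: "\<forall>g\<in>set gs. clk g s' xs = clk g s xs"
  proof
    fix g assume g: "g \<in> set gs"
    then obtain w where "clk g s xs = Some w" using all by auto
    then show "clk g s' xs = clk g s xs" using Comp.IH(2)[OF g] Comp.prems(2) by simp
  qed
  have "clk f s (map (\<lambda>g. the (clk g s xs)) gs) = Some v" using Comp.prems(1) all by simp
  then have "clk f s' (map (\<lambda>g. the (clk g s xs)) gs) = Some v" using Comp.IH(1) Comp.prems(2) by blast
  moreover have "map (\<lambda>g. the (clk g s' xs)) gs = map (\<lambda>g. the (clk g s xs)) gs" using same by simp
  ultimately show ?case using all same by (simp only: clk.simps if_True) simp
next
  case (Prec f g)
  show ?case
  proof (cases xs)
    case Nil then show ?thesis using Prec.prems by simp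
  next
    case (Cons n ys)
    have "\<forall>v. rec_nat (clk f s ys) (\<lambda>k r. case r of None \<Rightarrow> None | Some y \<Rightarrow> clk g s (y # k # ys)) m = Some v
      \<longrightarrow> rec_nat (clk f s' ys) (\<lambda>k r. case r of None \<Rightarrow> None | Some y \<Rightarrow> clk g s' (y # k # ys)) m = Some v" for m
    proof (induction m)
      case 0 then show ?case using Prec.IH(1) Prec.prems(2) by simp
    next
      case (Suc m)
      show ?case
      proof (intro allI impI)
        fix v assume a: "rec_nat (clk f s ys) (\<lambda>k r. case r of None \<Rightarrow> None | Some y \<Rightarrow> clk g s (y # k # ys)) (Suc m) = Some v"
        then obtain y where y: "rec_nat (clk f s ys) (\<lambda>k r. case r of None \<Rightarrow> None | Some y \<Rightarrow> clk g s (y # k # ys)) m = Some y"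
          by (auto split: option.splits)
        with a have "clk g s (y # m # ys) = Some v" by simp
        then have "clk g s' (y # m # ys) = Some v" using Prec.IH(2) Prec.prems(2) by blast
        then show "rec_nat (clk f s' ys) (\<lambda>k r. case r of None \<Rightarrow> None | Some y \<Rightarrow> clk g s' (y # k # ys)) (Suc m) = Some v"
          using Suc y by simp
      qed
    qed
    then show ?thesis using Prec.prems Cons by simp
  qed
next
  case (Minim f)
  let ?P = "\<lambda>s y. clk f s (y # xs) = Some 0 \<and> (\<forall>j<y. \<exists>v. clk f s (j # xs) = Some (Suc v))"
  have ex: "\<exists>y<s. ?P s y"
  proof (rule ccontr)
    assume "\<not> (\<exists>y<s. ?P s y)"
    then have "clk (Minim f) s xs = None" by (simp only: clk.simps if_False)
    with Minim.prems show False by simp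
  qed
  then obtain y where y: "y < s" "?P s y" by blast
  have "clk (Minim f) s xs = Some (LEAST y. ?P s y)" using ex by (simp only: clk.simps if_True)
  then have v: "v = (LEAST y. ?P s y)" using Minim.prems by simp
  have "?P s' y" using y Minim.IH Minim.prems(2) by blast
  moreover have "y < s'" using y Minim.prems(2) by simp
  moreover have "v = y" using v mok_least[OF y(2)] by simp
  ultimately have "\<exists>y<s'. ?P s' y" "(LEAST y. ?P s' y) = v" using mok_least[of "\<lambda>y. clk f s' (y # xs)" y] by auto
  then show ?case by (simp only: clk.simps if_True)
qed

lemma clk_sound: "clk p s xs = Some v \<Longrightarrow> evalr p xs v"
proof (induction p arbitrary: xs v)
  case Zero then show ?case by (auto intro: evalr.intros)
next
  case Succ then show ?case by (auto intro: evalr.intros split: list.splits)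
next
  case (Proj i) then show ?case by (auto intro: evalr.intros split: if_splits)
next
  case (Comp f gs)
  from Comp.prems have all: "\<forall>g\<in>set gs. clk g s xs \<noteq> None" by (auto split: if_splits)
  have "list_all2 (\<lambda>g y. evalr g xs y) gs (map (\<lambda>g. the (clk g s xs)) gs)"
    using all Comp.IH(2) by (auto simp: list_all2_conv_all_nth)
  moreover have "evalr f (map (\<lambda>g. the (clk g s xs)) gs) v" using Comp.IH(1) Comp.prems all by simp
  ultimately show ?case by (rule evalr.ev_comp)
next
  case (Prec f g)
  show ?case
  proof (cases xs)
    case Nil then show ?thesis using Prec.prems by simp
  next
    case (Cons n ys)
    have "\<forall>v. rec_nat (clk f s ys) (\<lambda>k r. case r of None \<Rightarrow> None | Some y \<Rightarrow> clk g s (y # k # ys)) m = Some v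
      \<longrightarrow> evalr (Prec f g) (m # ys) v" for m
    proof (induction m)
      case 0 then show ?case using Prec.IH(1) by (auto intro: evalr.intros)
    next
      case (Suc m)
      show ?case
      proof (intro allI impI)
        fix v assume a: "rec_nat (clk f s ys) (\<lambda>k r. case r of None \<Rightarrow> None | Some y \<Rightarrow> clk g s (y # k # ys)) (Suc m) = Some v"
        then obtain y where y: "rec_nat (clk f s ys) (\<lambda>k r. case r of None \<Rightarrow> None | Some y \<Rightarrow> clk g s (y # k # ys)) m = Some y"
          by (auto split: option.splits)
        with a have "clk g s (y # m # ys) = Some v" by simp
        then have "evalr g (y # m # ys) v" using Prec.IH(2) by blast
        then show "evalr (Prec f g) (Suc m # ys) v" using Suc y by (auto intro: evalr.intros)
      qed
    qed
    then show ?thesis using Prec.prems Cons by simp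
  qed
next
  case (Minim f)
  let ?P = "\<lambda>y. clk f s (y # xs) = Some 0 \<and> (\<forall>j<y. \<exists>v. clk f s (j # xs) = Some (Suc v))"
  have ex: "\<exists>y<s. ?P y"
  proof (rule ccontr)
    assume "\<not> (\<exists>y<s. ?P y)"
    then have "clk (Minim f) s xs = None" by (simp only: clk.simps if_False)
    with Minim.prems show False by simp
  qed
  then obtain y where y: "y < s" "?P y" by blast
  have "clk (Minim f) s xs = Some (LEAST y. ?P y)" using ex by (simp only: clk.simps if_True)
  then have "v = (LEAST y. ?P y)" using Minim.prems by simp
  then have vy: "v = y" using mok_least[OF y(2)] by simp
  show ?case unfolding vy
  proof (rule evalr.ev_minim)
    show "evalr f (y # xs) 0" using y Minim.IH by blast
    show "\<forall>k<y. \<exists>v. evalr f (k # xs) v \<and> 0 < v"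
    proof (intro allI impI)
      fix k assume "k < y"
      then obtain w where "clk f s (k # xs) = Some (Suc w)" using y by blast
      then show "\<exists>v. evalr f (k # xs) v \<and> 0 < v" using Minim.IH by blast
    qed
  qed
qed

lemma clk_complete: "evalr p xs v \<Longrightarrow> \<exists>s. clk p s xs = Some v"
proof (induction rule: evalr.induct)
  case (ev_zero xs) then show ?case by simp
next
  case (ev_succ x xs) then show ?case by simp
next
  case (ev_proj i xs) then show ?case by simp
next
  case (ev_comp xs gs ys f z)
  have "\<exists>s. \<forall>i<length gs. clk (gs ! i) s xs = Some (ys ! i)"
  proof -
    have "\<forall>i<length gs. \<exists>s. clk (gs ! i) s xs = Some (ys ! i)"
      using ev_comp.IH by (auto simp: list_all2_conv_all_nth)
    then obtain S where S: "\<forall>i<length gs. clk (gs ! i) (S i) xs = Some (ys ! i)" by metis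
    define s where "s = Max (S ` {..<length gs})"
    have "\<forall>i<length gs. clk (gs ! i) s xs = Some (ys ! i)"
      using S by (auto intro: clk_mono simp: s_def)
    then show ?thesis by blast
  qed
  then obtain s1 where s1: "\<forall>i<length gs. clk (gs ! i) s1 xs = Some (ys ! i)" by blast
  obtain s2 where s2: "clk f s2 ys = Some z" using ev_comp.IH by blast
  have len: "length ys = length gs" using ev_comp.IH by (simp add: list_all2_lengthD)
  have a1: "\<forall>i<length gs. clk (gs ! i) (max s1 s2) xs = Some (ys ! i)" using s1 by (auto intro: clk_mono)
  then have "\<forall>g\<in>set gs. clk g (max s1 s2) xs \<noteq> None" by (metis in_set_conv_nth option.distinct(1))
  moreover have "map (\<lambda>g. the (clk g (max s1 s2) xs)) gs = ys"
    using a1 len by (auto intro: nth_equalityI)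
  moreover have "clk f (max s1 s2) ys = Some z" using s2 by (auto intro: clk_mono)
  ultimately have "clk (Comp f gs) (max s1 s2) xs = Some z" by (simp only: clk.simps if_True) simp
  then show ?case by blast
next
  case (ev_prec0 f xs y g) then show ?case by (auto)
next
  case (ev_precS f g n xs y z)
  obtain s1 where s1: "clk (Prec f g) s1 (n # xs) = Some y" using ev_precS.IH by blast
  obtain s2 where s2: "clk g s2 (y # n # xs) = Some z" using ev_precS.IH by blast
  have "clk (Prec f g) (max s1 s2) (n # xs) = Some y" by (rule clk_mono[OF s1]) simp
  moreover have "clk g (max s1 s2) (y # n # xs) = Some z" by (rule clk_mono[OF s2]) simp
  ultimately have "clk (Prec f g) (max s1 s2) (Suc n # xs) = Some z" by simp
  then show ?case by blast
next
  case (ev_minim f y xs)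
  obtain s0 where s0: "clk f s0 (y # xs) = Some 0" using ev_minim.IH by blast
  have "\<forall>k\<in>{..<y}. \<exists>s. \<exists>w. clk f s (k # xs) = Some (Suc w)"
  proof
    fix k assume "k \<in> {..<y}"
    then have "k < y" by simp
    then obtain v where v: "0 < v" "\<exists>s. clk f s (k # xs) = Some v" using ev_minim.IH by blast
    then obtain w where "v = Suc w" using gr0_implies_Suc by blast
    then show "\<exists>s w. clk f s (k # xs) = Some (Suc w)" using v by blast
  qed
  then obtain S where SW: "\<forall>k\<in>{..<y}. \<exists>w. clk f (S k) (k # xs) = Some (Suc w)" by (rule bchoice[elim_format]) blast
  define s where "s = max (Suc y) (max s0 (Max (S ` {..<y})))"
  have P: "clk f s (y # xs) = Some 0 \<and> (\<forall>j<y. \<exists>v. clk f s (j # xs) = Some (Suc v))"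
  proof (intro conjI allI impI)
    show "clk f s (y # xs) = Some 0" using s0 by (rule clk_mono) (simp add: s_def)
    fix j assume j: "j < y"
    then obtain w where w: "clk f (S j) (j # xs) = Some (Suc w)" using SW by auto
    have "S j \<le> Max (S ` {..<y})" using j by (intro Max_ge) auto
    then have "S j \<le> s" by (simp add: s_def)
    then have "clk f s (j # xs) = Some (Suc w)" by (rule clk_mono[OF w])
    then show "\<exists>v. clk f s (j # xs) = Some (Suc v)" by blast
  qed
  have "y < s" by (simp add: s_def)
  then have ex: "\<exists>y'<s. clk f s (y' # xs) = Some 0 \<and> (\<forall>j<y'. \<exists>v. clk f s (j # xs) = Some (Suc v))" using P by blast
  have "clk (Minim f) s xs = Some y"
    using ex mok_least[OF P] by (simp only: clk.simps if_True)
  then show ?case by blast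
qed

definition enc :: "nat option \<Rightarrow> nat" where "enc r = (case r of None \<Rightarrow> 0 | Some v \<Rightarrow> Suc v)"

lemma enc_simps[simp]: "enc None = 0" "enc (Some v) = Suc v" by (auto simp: enc_def)
lemma enc_eq1: "enc r = 1 \<longleftrightarrow> r = Some 0" by (cases r) auto
lemma enc_ge2: "2 \<le> enc r \<longleftrightarrow> (\<exists>v. r = Some (Suc v))" by (cases r) (auto, presburger)
lemma enc_eq1': "enc r = Suc 0 \<longleftrightarrow> r = Some 0" by (cases r) auto
lemma enc_pos: "0 < enc r \<longleftrightarrow> r \<noteq> None" by (cases r) auto

lemma prc_prodlist: "(\<forall>g\<in>set gs. prc k (h g)) \<Longrightarrow> prc k (\<lambda>xs. prod_list (map (\<lambda>g. h g xs) gs))"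
  by (induction gs) (auto intro: prc_mult prc_const)

lemma prcl_map: "(\<forall>g\<in>set gs. prc k (h g)) \<Longrightarrow> prcl k (length gs) (\<lambda>xs. map (\<lambda>g. h g xs) gs)"
  by (induction gs) (auto intro: prcl_cons prcl_nil)

lemma prod_list_one: "(\<forall>x\<in>set xs. f x = (1::nat)) \<Longrightarrow> prod_list (map f xs) = 1"
  by (induction xs) auto

lemma enc_comp: "enc (clk (Comp f gs) s xs) =
   prod_list (map (\<lambda>g. ind (0 < enc (clk g s xs))) gs) * enc (clk f s (map (\<lambda>g. enc (clk g s xs) - 1) gs))"
proof (cases "\<forall>g\<in>set gs. clk g s xs \<noteq> None")
  case True
  then have p1: "prod_list (map (\<lambda>g. ind (0 < enc (clk g s xs))) gs) = 1"
    by (intro prod_list_one) (auto simp: ind_def enc_pos)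
  have meq: "map (\<lambda>g. enc (clk g s xs) - 1) gs = map (\<lambda>g. the (clk g s xs)) gs"
    using True by (auto simp: enc_def split: option.splits)
  have c1: "clk (Comp f gs) s xs = clk f s (map (\<lambda>g. the (clk g s xs)) gs)" using True by simp
  show ?thesis unfolding p1 meq c1 by simp
next
  case False
  then obtain g where "g \<in> set gs" "clk g s xs = None" by auto
  then have "prod_list (map (\<lambda>g. ind (0 < enc (clk g s xs))) gs) = 0"
    by (auto simp: prod_list_zero_iff ind_def image_iff intro!: bexI[of _ g])
  moreover have "clk (Comp f gs) s xs = None" using False by (simp only: clk.simps if_False)
  ultimately show ?thesis by simp
qed

lemma enc_prec: "enc (rec_nat (clk f s ys) (\<lambda>k r. case r of None \<Rightarrow> None | Some y \<Rightarrow> clk g s (y # k # ys)) n)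
  = rec_nat (enc (clk f s ys)) (\<lambda>j y. ind (0 < y) * enc (clk g s ((y - 1) # j # ys))) n"
proof (induction n)
  case 0 then show ?case by simp
next
  case (Suc n)
  let ?R = "rec_nat (clk f s ys) (\<lambda>k r. case r of None \<Rightarrow> None | Some y \<Rightarrow> clk g s (y # k # ys)) n"
  let ?E = "rec_nat (enc (clk f s ys)) (\<lambda>j y. ind (0 < y) * enc (clk g s ((y - 1) # j # ys))) n"
  show ?case
  proof (cases ?R)
    case None
    then have "?E = 0" using Suc.IH by simp
    then show ?thesis using None by (simp add: ind_def)
  next
    case (Some a)
    then have "?E = Suc a" using Suc.IH by simp
    then show ?thesis using Some by (simp add: ind_def)
  qed
qed

lemma sum_unique:
  assumes "\<And>y1 y2. P y1 \<Longrightarrow> P y2 \<Longrightarrow> y1 = (y2::nat)"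
  shows "(\<Sum>y<s. Suc y * ind (P y)) = (if \<exists>y<s. P y then Suc (LEAST y. P y) else 0)"
proof (cases "\<exists>y<s. P y")
  case True
  then obtain y0 where y0: "y0 < s" "P y0" by blast
  have L: "(LEAST y. P y) = y0" using y0 assms by (intro Least_equality) auto
  have "(\<Sum>y<s. Suc y * ind (P y)) = (\<Sum>y<s. if y = y0 then Suc y0 else 0)"
    using assms y0 by (intro sum.cong) (auto simp: ind_def)
  also have "\<dots> = Suc y0" using y0 by simp
  finally show ?thesis using True L by simp
next
  case False
  then show ?thesis by (auto simp: ind_def)
qed

lemma enc_minim: "enc (clk (Minim f) s xs) =
  (\<Sum>y<s. Suc y * ind (enc (clk f s (y # xs)) = 1 \<and> (\<forall>j<y. 2 \<le> enc (clk f s (j # xs)))))"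
proof -
  let ?P = "\<lambda>y. clk f s (y # xs) = Some 0 \<and> (\<forall>j<y. \<exists>v. clk f s (j # xs) = Some (Suc v))"
  have "(\<Sum>y<s. Suc y * ind (enc (clk f s (y # xs)) = 1 \<and> (\<forall>j<y. 2 \<le> enc (clk f s (j # xs)))))
     = (\<Sum>y<s. Suc y * ind (?P y))" by (simp add: enc_eq1 enc_eq1' enc_ge2)
  also have "\<dots> = (if \<exists>y<s. ?P y then Suc (LEAST y. ?P y) else 0)"
    by (rule sum_unique) (rule mok_unique[of "\<lambda>y. clk f s (y # xs)"], assumption+)
  also have "\<dots> = enc (clk (Minim f) s xs)" by (simp only: clk.simps) (simp, blast)
  finally show ?thesis by simp
qed

lemma prcl_tl': "prcl k m F \<Longrightarrow> prcl k (m - 1) (\<lambda>xs. tl (F xs))"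
  by (cases m) (auto simp: prcl_def intro: prcl_tl[unfolded prcl_def, THEN conjunct2, rule_format])

lemma prc_hdl': "prcl k m F \<Longrightarrow> 0 < m \<Longrightarrow> prc k (\<lambda>xs. hd (F xs))"
  by (cases m) (auto intro: prc_hdl)

lemma prc_compl': "prc m f \<Longrightarrow> prcl k m' F \<Longrightarrow> m' = m \<Longrightarrow> prc k (\<lambda>xs. f (F xs))"
  using prc_compl by blast

lemma prcl_tl_eta: "prcl k (k - 1) tl"
  using prcl_tl'[OF prcl_id[of k]] by simp

lemma prc_hd_eta: "0 < k \<Longrightarrow> prc k hd"
  using prc_hdl'[OF prcl_id[of k]] by simp

lemmas prc_rules2 = prcl_tl_eta prc_hd_eta prc_const prc_add prc_mult prc_monus prc_pow prc_tri prc_mod prc_succ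
  prc_ind_le prc_ind_less prc_ind_eq prc_ind_and prc_ind_not prc_ind_or prc_ind_imp prc_if
  prc_sum prc_ind_ex prc_ind_all prc_sg prc_hdl' prc_nthl prcl_tl' prcl_id prcl_cons prcl_nil

lemma tl_len1: "length xs = Suc 0 \<Longrightarrow> tl xs = []" by (cases xs) auto

theorem prc_clk: "prc (Suc k) (\<lambda>xs. enc (clk p (hd xs) (tl xs)))"
proof (induction p arbitrary: k)
  case Zero
  show ?case by (rule prc_cong[OF prc_const[of _ 1]]) simp
next
  case Succ
  show ?case
  proof (cases k)
    case 0 then show ?thesis by (intro prc_cong[OF prc_zero]) (simp add: tl_len1)
  next
    case (Suc k')
    have "prc (Suc k) (\<lambda>xs. Suc (Suc (hd (tl xs))))"
      by (rule prc_rules2 | simp add: Suc)+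
    then show ?thesis
    proof (rule prc_cong)
      fix xs :: "nat list" assume "length xs = Suc k"
      then obtain s n ys where xs: "xs = s # n # ys" using Suc by (cases xs; cases "tl xs") auto
      show "Suc (Suc (hd (tl xs))) = enc (clk Succ (hd xs) (tl xs))" unfolding xs by simp
    qed
  qed
next
  case (Proj i)
  have "prc (Suc k) (\<lambda>xs. if i < k then Suc (tl xs ! i) else 0)"
  proof (cases "i < k")
    case True then show ?thesis by simp (rule prc_rules2 | simp)+
  next
    case False then show ?thesis by (simp add: prc_zero)
  qed
  then show ?case by (rule prc_cong) auto
next
  case (Comp f gs)
  have hF: "prc (Suc (length gs)) (\<lambda>xs. enc (clk f (hd xs) (tl xs)))" using Comp.IH(1) by blast
  have hG: "\<forall>g\<in>set gs. prc (Suc k) (\<lambda>xs. enc (clk g (hd xs) (tl xs)))" using Comp.IH(2) by blast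
  have "prc (Suc k) (\<lambda>xs. prod_list (map (\<lambda>g. ind (0 < enc (clk g (hd xs) (tl xs)))) gs) *
     (\<lambda>xs. enc (clk f (hd xs) (tl xs))) (hd xs # map (\<lambda>g. enc (clk g (hd xs) (tl xs)) - 1) gs))"
  proof (rule prc_mult)
    show "prc (Suc k) (\<lambda>xs. prod_list (map (\<lambda>g. ind (0 < enc (clk g (hd xs) (tl xs)))) gs))"
      using hG by (intro prc_prodlist ballI prc_sg) auto
    have L: "prcl (Suc k) (length gs) (\<lambda>xs. map (\<lambda>g. enc (clk g (hd xs) (tl xs)) - 1) gs)"
      using hG by (intro prcl_map ballI prc_monus prc_const) auto
    have "prcl (Suc k) (Suc (length gs)) (\<lambda>xs. hd xs # map (\<lambda>g. enc (clk g (hd xs) (tl xs)) - 1) gs)"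
      by (rule prcl_cons[OF prc_hd_eta L]) simp
    then show "prc (Suc k) (\<lambda>xs. (\<lambda>xs. enc (clk f (hd xs) (tl xs))) (hd xs # map (\<lambda>g. enc (clk g (hd xs) (tl xs)) - 1) gs))"
      by (rule prc_compl[OF hF])
  qed
  then show ?case by (rule prc_cong) (unfold enc_comp, simp)
next
  case (Prec f g)
  show ?case
  proof (cases k)
    case 0 then show ?thesis by (intro prc_cong[OF prc_zero]) (simp add: tl_len1)
  next
    case (Suc k')
    have hF: "prc (Suc k') (\<lambda>xs. enc (clk f (hd xs) (tl xs)))" using Prec.IH(1) by blast
    have hG: "prc (Suc (Suc (Suc k'))) (\<lambda>xs. enc (clk g (hd xs) (tl xs)))" using Prec.IH(2) by blast
    define gf where "gf = (\<lambda>ws. ind (0 < hd ws) * (\<lambda>xs. enc (clk g (hd xs) (tl xs)))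
       (hd (tl (tl ws)) # (hd ws - 1) # hd (tl ws) # tl (tl (tl ws))))"
    have "prc (Suc (Suc (Suc k'))) gf" unfolding gf_def
      by (rule prc_rules2 prc_compl'[OF hG] | simp)+
    from prc_prec[OF hF this]
    have H: "prc (Suc (Suc k')) (\<lambda>zs. rec_nat ((\<lambda>xs. enc (clk f (hd xs) (tl xs))) (tl zs)) (\<lambda>n y. gf (y # n # tl zs)) (hd zs))" .
    have "prc (Suc k) (\<lambda>xs. (\<lambda>zs. rec_nat ((\<lambda>xs. enc (clk f (hd xs) (tl xs))) (tl zs)) (\<lambda>n y. gf (y # n # tl zs)) (hd zs))
       (hd (tl xs) # hd xs # tl (tl xs)))"
      by (rule prc_compl'[OF H] prc_rules2 | simp add: Suc)+
    then show ?thesis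
    proof (rule prc_cong)
      fix xs :: "nat list" assume "length xs = Suc k"
      then obtain s n ys where xs: "xs = s # n # ys" using Suc by (cases xs; cases "tl xs") auto
      show "(\<lambda>zs. rec_nat ((\<lambda>xs. enc (clk f (hd xs) (tl xs))) (tl zs)) (\<lambda>n y. gf (y # n # tl zs)) (hd zs))
       (hd (tl xs) # hd xs # tl (tl xs)) = enc (clk (Prec f g) (hd xs) (tl xs))"
        unfolding xs by (simp add: enc_prec gf_def)
    qed
  qed
next
  case (Minim f)
  have hF: "prc (Suc (Suc k)) (\<lambda>xs. enc (clk f (hd xs) (tl xs)))" using Minim.IH by blast
  have "prc (Suc k) (\<lambda>xs. \<Sum>y<hd xs. Suc y * ind ((\<lambda>xs. enc (clk f (hd xs) (tl xs))) (hd xs # y # tl xs) = 1 \<and>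
       (\<forall>j<y. 2 \<le> (\<lambda>xs. enc (clk f (hd xs) (tl xs))) (hd xs # j # tl xs))))"
    by (rule prc_rules2 prc_compl'[OF hF] | simp)+
  then show ?case by (rule prc_cong) (unfold enc_minim, simp)
qed

definition fd :: "nat \<Rightarrow> nat" where "fd i = fst (prod_decode i)"
definition wr :: "nat set \<Rightarrow> real" where "wr A = (\<Sum>i\<in>A. (1/2::real) ^ fd i)"
definition bitn :: "nat \<Rightarrow> nat \<Rightarrow> bool" where "bitn r i \<longleftrightarrow> 2^i \<le> r mod 2^(Suc i)"
definition NZ :: "nat set \<Rightarrow> nat \<Rightarrow> nat" where "NZ Z n = (\<Sum>i<n. if i \<in> Z then 2^i else 0)"
definition lenc :: "nat \<Rightarrow> nat" where "lenc c = (\<Sum>i<c. ind (2^(Suc i) \<le> c))"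
definition fdn :: "nat \<Rightarrow> nat" where "fdn i = (\<Sum>n<Suc i. n * ind (\<exists>m<Suc i. triangle (n + m) + n = i))"

lemma fd_le: "fd i \<le> i"
  unfolding fd_def using le_prod_encode_1[of "fst (prod_decode i)" "snd (prod_decode i)"] by simp

lemma wr_nonneg: "0 \<le> wr A" unfolding wr_def by (simp add: sum_nonneg)
lemma wr_mono: "finite B \<Longrightarrow> A \<subseteq> B \<Longrightarrow> wr A \<le> wr B" unfolding wr_def by (rule sum_mono2) auto

lemma foldr_affine: "foldr (\<lambda>b acc. (if b then 1 else 0) + 2 * acc) xs acc
   = foldr (\<lambda>b acc. (if b then 1 else 0) + 2 * acc) xs 0 + 2 ^ length xs * (acc::nat)"
  by (induction xs) (auto simp: algebra_simps)

lemma str_code_snoc: "str_code (xs @ [b]) = str_code xs + 2 ^ length xs * ((if b then 1 else 0) + 1)"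
  unfolding str_code_def
  by (simp only: foldr_append foldr.simps o_def id_def)
     (subst (1 2) foldr_affine, simp add: algebra_simps)

lemma prefix_of_Suc: "prefix_of Z (Suc n) = prefix_of Z n @ [n \<in> Z]"
  unfolding prefix_of_def by simp

lemma length_prefix_of[simp]: "length (prefix_of Z n) = n" unfolding prefix_of_def by simp

lemma NZ_Suc: "NZ Z (Suc n) = NZ Z n + (if n \<in> Z then 2^n else 0)"
  unfolding NZ_def by simp

lemma str_code_prefix: "str_code (prefix_of Z n) = 2^n + NZ Z n"
proof (induction n)
  case 0 then show ?case by (simp add: str_code_def prefix_of_def NZ_def)
next
  case (Suc n) then show ?case by (simp add: prefix_of_Suc str_code_snoc NZ_Suc)
qed

lemma NZ_0[simp]: "NZ Z 0 = 0" by (simp add: NZ_def)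

lemma NZ_less: "NZ Z n < 2^n"
  by (induction n) (auto simp: NZ_Suc)

lemma mod_add_dvd: "(m::nat) dvd b \<Longrightarrow> (a + b) mod m = a mod m"
  by (metis add.right_neutral dvd_imp_mod_0 mod_add_right_eq)

lemma NZ_mod: "j \<le> n \<Longrightarrow> NZ Z n mod 2^j = NZ Z j"
proof (induction n)
  case 0 then show ?case by simp
next
  case (Suc n)
  show ?case
  proof (cases "j = Suc n")
    case True then show ?thesis using NZ_less[of Z "Suc n"] by (simp only: mod_less)
  next
    case False
    then have "j \<le> n" using Suc.prems by simp
    then have "2^j dvd (if n \<in> Z then 2^n else 0::nat)" by (simp add: le_imp_power_dvd)
    then show ?thesis using Suc.IH \<open>j \<le> n\<close> by (simp add: NZ_Suc mod_add_dvd)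
  qed
qed

lemma bitn_NZ: "i < n \<Longrightarrow> bitn (NZ Z n) i \<longleftrightarrow> i \<in> Z"
proof -
  assume "i < n"
  then have "NZ Z n mod 2^(Suc i) = NZ Z (Suc i)" by (intro NZ_mod) simp
  then have "NZ Z n mod 2^(Suc i) = NZ Z i + (if i \<in> Z then 2^i else 0)"
    by (simp only: NZ_Suc)
  then show ?thesis using NZ_less[of Z i] by (simp add: bitn_def)
qed

lemma bitn_code: "i < n \<Longrightarrow> bitn (2^n + NZ Z n) i \<longleftrightarrow> i \<in> Z"
proof -
  assume a: "i < n"
  then have "(2::nat)^(Suc i) dvd 2^n" by (intro le_imp_power_dvd) simp
  then have "(2^n + NZ Z n) mod 2^(Suc i) = NZ Z n mod 2^(Suc i)"
    by (metis add.commute mod_add_dvd)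
  then show ?thesis using bitn_NZ[OF a] by (simp add: bitn_def)
qed

lemma sum_ind_less: "(\<Sum>i<c. ind (i < n)) = min c n"
  by (induction c) (auto simp: ind_def)

lemma lenc_code: "lenc (2^n + NZ Z n) = n"
proof -
  let ?c = "2^n + NZ Z n"
  have "ind (2^(Suc i) \<le> ?c) = ind (i < n)" for i
  proof (cases "i < n")
    case True
    then have "(2::nat)^(Suc i) \<le> 2^n" by (intro power_increasing) auto
    then show ?thesis using True by (simp add: ind_def)
  next
    case False
    then have "(2::nat)^(Suc n) \<le> 2^(Suc i)" by (intro power_increasing) auto
    moreover have "?c < 2^(Suc n)" using NZ_less[of Z n] by simp
    ultimately have "?c < 2^(Suc i)" by linarith
    then show ?thesis using False by (simp add: ind_def)
  qed
  then have "lenc ?c = (\<Sum>i<?c. ind (i < n))" unfolding lenc_def by simp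
  also have "\<dots> = min ?c n" by (rule sum_ind_less)
  also have "\<dots> = n" using less_exp[of n] by (intro min_absorb2) linarith
  finally show ?thesis .
qed

lemma bitn_mod: "i < m \<Longrightarrow> bitn (r mod 2^m) i = bitn r i"
  unfolding bitn_def by (subst mod_mod_cancel) (auto intro: le_imp_power_dvd simp del: power_Suc)

lemma mod_mod_pow: "j \<le> m \<Longrightarrow> (r::nat) mod 2^m mod 2^j = r mod 2^j"
  by (rule mod_mod_cancel) (rule le_imp_power_dvd)

lemma fdn_eq: "fdn i = fd i"
proof -
  obtain a b where ab: "prod_decode i = (a, b)" by (cases "prod_decode i")
  have pe: "prod_encode (a, b) = i" using prod_decode_inverse[of i] ab by simp
  then have i: "i = triangle (a + b) + a" by (simp add: prod_encode_def)
  have P: "(\<exists>m<Suc i. triangle (n + m) + n = i) \<longleftrightarrow> n = a" for n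
  proof
    assume "\<exists>m<Suc i. triangle (n + m) + n = i"
    then obtain m where "triangle (n + m) + n = i" by blast
    then have "prod_encode (n, m) = i" by (simp add: prod_encode_def)
    then have "(n, m) = prod_decode i" using prod_encode_inverse[of "(n, m)"] by simp
    then show "n = a" using ab by simp
  next
    assume "n = a"
    moreover have "b < Suc i" using le_prod_encode_2[of b a] pe by simp
    ultimately show "\<exists>m<Suc i. triangle (n + m) + n = i" using i by blast
  qed
  have "a < Suc i" using le_prod_encode_1[of a b] pe by simp
  have "fdn i = (\<Sum>n<Suc i. if n = a then a else 0)"
    unfolding fdn_def by (intro sum.cong) (auto simp: P ind_def)
  also have "\<dots> = a" using \<open>a < Suc i\<close> by simp
  finally show ?thesis by (simp add: fd_def ab)
qed

lemma weight_scale: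
  assumes "finite A" "\<forall>i\<in>A. i < n"
  shows "(\<Sum>i\<in>A. (2::nat)^(n + J - fd i)) \<le> 2^n \<longleftrightarrow> wr A \<le> (1/2)^J"
proof -
  have e: "real ((2::nat)^(n + J - fd i)) = 2^(n+J) * (1/2::real)^fd i" if "i \<in> A" for i
  proof -
    have "fd i \<le> n + J" using fd_le[of i] assms(2) that by fastforce
    then have "(2::real)^(n + J) = 2^(n + J - fd i) * 2^fd i" by (simp add: power_add[symmetric])
    then show ?thesis by (simp add: power_one_over field_simps)
  qed
  have "(\<Sum>i\<in>A. (2::nat)^(n + J - fd i)) \<le> 2^n \<longleftrightarrow> real (\<Sum>i\<in>A. (2::nat)^(n + J - fd i)) \<le> real (2^n)"
    by linarith
  also have "real (\<Sum>i\<in>A. (2::nat)^(n + J - fd i)) = 2^(n+J) * wr A"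
    unfolding of_nat_sum wr_def sum_distrib_left using e by (intro sum.cong) auto
  also have "2^(n+J) * wr A \<le> real (2^n) \<longleftrightarrow> wr A \<le> (1/2)^J"
  proof -
    have "(2::real)^(n+J) * (1/2)^J = 2^n" by (simp add: power_add power_one_over field_simps)
    then have "2^(n+J) * wr A \<le> real (2^n) \<longleftrightarrow> 2^(n+J) * wr A \<le> 2^(n+J) * (1/2::real)^J" by simp
    also have "\<dots> \<longleftrightarrow> wr A \<le> (1/2)^J" by (rule mult_le_cancel_left_pos) simp
    finally show ?thesis .
  qed
  finally show ?thesis .
qed

lemma wt_alt: "wt A = (\<Sum>k. if k \<in> A then ennreal ((1/2)^fd k) else 0)"
  unfolding wt_def fd_def ..

lemma wt_finite: "finite A \<Longrightarrow> wt A = ennreal (wr A)"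
proof -
  assume fin: "finite A"
  have "wt A = (\<Sum>k\<in>A. if k \<in> A then ennreal ((1/2)^fd k) else 0)"
    unfolding wt_alt by (rule suminf_finite[OF fin]) auto
  also have "\<dots> = (\<Sum>k\<in>A. ennreal ((1/2)^fd k))" by simp
  also have "\<dots> = ennreal (wr A)" unfolding wr_def by (rule sum_ennreal) simp
  finally show ?thesis .
qed

lemma wt_mono: "A \<subseteq> B \<Longrightarrow> wt A \<le> wt B"
  unfolding wt_alt by (rule suminf_le) auto

lemma wt_union: "wt (A \<union> B) \<le> wt A + wt B"
  unfolding wt_alt suminf_add[OF summableI summableI]
  by (rule suminf_le) auto

lemma wt_SUP: "wt A = (SUP n. ennreal (wr (A \<inter> {..<n})))"
proof -
  have "(\<Sum>i<n. if i \<in> A then ennreal ((1/2)^fd i) else 0) = ennreal (wr (A \<inter> {..<n}))" for n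
  proof -
    have "(\<Sum>i<n. if i \<in> A then ennreal ((1/2)^fd i) else 0) = (\<Sum>i\<in>{..<n} \<inter> A. ennreal ((1/2)^fd i))"
      by (rule sum.inter_restrict[symmetric]) simp
    also have "{..<n} \<inter> A = A \<inter> {..<n}" by (rule Int_commute)
    finally show ?thesis unfolding wr_def by simp
  qed
  then show ?thesis unfolding wt_alt suminf_eq_SUP by simp
qed

lemma wt_le_bound: "(\<And>n. wr (A \<inter> {..<n}) \<le> c) \<Longrightarrow> wt A \<le> ennreal c"
  unfolding wt_SUP by (rule SUP_least) (simp add: ennreal_leI)

lemma wr_le_wt: "finite F \<Longrightarrow> F \<subseteq> A \<Longrightarrow> ennreal (wr F) \<le> wt A"
  using wt_mono wt_finite by metis

lemma wt_tail:
  assumes "wt D < \<infinity>" "0 < \<epsilon>"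
  shows "\<exists>K. wt (D \<inter> {K..}) \<le> ennreal \<epsilon>"
proof -
  define d where "d = enn2real (wt D)"
  have wD: "wt D = ennreal d" using assms(1) unfolding d_def by (simp add: ennreal_enn2real less_top)
  have d0: "0 \<le> d" unfolding d_def by simp
  obtain K where K: "d - \<epsilon> < wr (D \<inter> {..<K})"
  proof (cases "d - \<epsilon> < 0")
    case True then show ?thesis using that[of 0] by (simp add: wr_def)
  next
    case False
    then have "ennreal (d - \<epsilon>) < ennreal d" using assms(2) by (subst ennreal_less_iff) (use False in auto)
    then have "ennreal (d - \<epsilon>) < (SUP n. ennreal (wr (D \<inter> {..<n})))" using wD wt_SUP by metis
    then obtain n where "ennreal (d - \<epsilon>) < ennreal (wr (D \<inter> {..<n}))" by (auto simp: less_SUP_iff)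
    then have "d - \<epsilon> < wr (D \<inter> {..<n})" using wr_nonneg False by (subst (asm) ennreal_less_iff) auto
    then show ?thesis using that by blast
  qed
  have "wr ((D \<inter> {K..}) \<inter> {..<n}) \<le> \<epsilon>" for n
  proof -
    let ?F1 = "(D \<inter> {K..}) \<inter> {..<n}" and ?F0 = "D \<inter> {..<K}"
    have "wr (?F1 \<union> ?F0) = wr ?F1 + wr ?F0" unfolding wr_def
      by (rule sum.union_disjoint) auto
    moreover have "ennreal (wr (?F1 \<union> ?F0)) \<le> ennreal d" using wr_le_wt[of "?F1 \<union> ?F0" D] wD by auto
    then have "wr (?F1 \<union> ?F0) \<le> d" using d0 by simp
    ultimately show ?thesis using K by linarith
  qed
  then show ?thesis using wt_le_bound by blast
qed

lemma mod_Suc_pow_cases: "(r::nat) mod 2^(Suc m) = r mod 2^m \<or> r mod 2^(Suc m) = r mod 2^m + 2^m"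
proof -
  have "r mod (2^m * 2) = 2^m * (r div 2^m mod 2) + r mod 2^m" by (rule mod_mult2_eq)
  moreover have "r div 2^m mod 2 = 0 \<or> r div 2^m mod 2 = 1" by auto
  ultimately show ?thesis by (auto simp: mult.commute)
qed

lemma koenig:
  fixes G :: "nat \<Rightarrow> nat \<Rightarrow> bool"
  assumes lt: "\<And>n r. G n r \<Longrightarrow> r < 2^n"
    and pre: "\<And>n r m. G n r \<Longrightarrow> m \<le> n \<Longrightarrow> G m (r mod 2^m)"
    and ex: "\<And>n. \<exists>r. G n r"
  shows "\<exists>X. \<forall>m. G m (NZ X m)"
proof -
  define E where "E m q \<longleftrightarrow> (\<forall>n\<ge>m. \<exists>r. G n r \<and> r mod 2^m = q)" for m q
  have E0: "E 0 0" unfolding E_def using ex by auto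
  have E_G: "G m q" if Em: "E m q" for m q
  proof -
    obtain r where r: "G m r" "r mod 2^m = q" using Em unfolding E_def by blast
    then have "r = q" using lt[OF r(1)] by simp
    then show ?thesis using r by simp
  qed
  have step: "E (Suc m) q \<or> E (Suc m) (q + 2^m)" if Em: "E m q" for m q
  proof (rule ccontr)
    assume "\<not> (E (Suc m) q \<or> E (Suc m) (q + 2^m))"
    then obtain n1 n2 where n1: "n1 \<ge> Suc m" "\<forall>r. G n1 r \<longrightarrow> r mod 2^(Suc m) \<noteq> q"
      and n2: "n2 \<ge> Suc m" "\<forall>r. G n2 r \<longrightarrow> r mod 2^(Suc m) \<noteq> q + 2^m"
      unfolding E_def by blast
    let ?n = "max n1 n2"
    have "?n \<ge> m" using n1(1) by simp
    then obtain r where r: "G ?n r" "r mod 2^m = q" using Em unfolding E_def by blast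
    have g1: "G n1 (r mod 2^n1)" by (rule pre[OF r(1)]) simp
    have g2: "G n2 (r mod 2^n2)" by (rule pre[OF r(1)]) simp
    have m1: "r mod 2^n1 mod 2^(Suc m) = r mod 2^(Suc m)" by (rule mod_mod_pow[OF n1(1)])
    have m2: "r mod 2^n2 mod 2^(Suc m) = r mod 2^(Suc m)" by (rule mod_mod_pow[OF n2(1)])
    from mod_Suc_pow_cases[of r m] show False
    proof
      assume "r mod 2^(Suc m) = r mod 2^m"
      then show False using n1(2) g1 m1 r(2) by auto
    next
      assume "r mod 2^(Suc m) = r mod 2^m + 2^m"
      then show False using n2(2) g2 m2 r(2) by auto
    qed
  qed
  define q where "q = rec_nat 0 (\<lambda>m qm. if E (Suc m) qm then qm else qm + 2^m)"
  have q0: "q 0 = 0" and qS: "q (Suc m) = (if E (Suc m) (q m) then q m else q m + 2^m)" for m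
    unfolding q_def by simp_all
  have Eq: "E m (q m)" for m
  proof (induction m)
    case 0 then show ?case using E0 q0 by simp
  next
    case (Suc m) then show ?case using step[OF Suc] qS[of m] by auto
  qed
  define X where "X = {i. q (Suc i) \<noteq> q i}"
  have NZq: "NZ X m = q m" for m
  proof (induction m)
    case 0 then show ?case using q0 by simp
  next
    case (Suc m) then show ?case by (auto simp: NZ_Suc X_def qS)
  qed
  show ?thesis
  proof (intro exI allI)
    fix m show "G m (NZ X m)" unfolding NZq by (rule E_G[OF Eq])
  qed
qed

definition RP :: "nat set \<Rightarrow> nat \<Rightarrow> nat \<Rightarrow> nat \<Rightarrow> nat \<Rightarrow> recf \<Rightarrow> nat \<Rightarrow> bool" where
 "RP R J L t K p c \<longleftrightarrow> (\<exists>r<2^(lenc c). (\<forall>j<Suc (lenc c). r mod 2^j + 2^j \<in> R) \<and> (\<forall>i<lenc c. bitn r i \<longrightarrow> bitn c i) \<and>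
     (\<Sum>i<lenc c. ind (bitn c i \<and> \<not> bitn r i) * 2^(lenc c + J - fdn i)) \<le> 2^(lenc c)) \<and>
   (\<forall>i<lenc c. bitn c i \<and> i < L \<longrightarrow> bitn t i) \<and>
   (\<forall>i<lenc c. K \<le> i \<and> (\<exists>s<Suc (lenc c). 0 < enc (clk p s [i])) \<longrightarrow> bitn c i)"

lemma prc_clk2: "prc k g1 \<Longrightarrow> prc k g2 \<Longrightarrow> prc k (\<lambda>xs. enc (clk p (g1 xs) [g2 xs]))"
proof -
  assume a: "prc k g1" "prc k g2"
  have "prc k (\<lambda>xs. (\<lambda>ys. enc (clk p (hd ys) (tl ys))) [g1 xs, g2 xs])"
    by (rule prc_compl'[OF prc_clk[of 1 p]]) (rule prcl_cons a prcl_nil | simp)+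
  then show ?thesis by simp
qed

lemma RP_dec: assumes dR: "decidable_set R" shows "decidable_set {c. RP R J L t K p c}"
proof -
  have "prc 1 (\<lambda>xs. ind (RP R J L t K p (hd xs)))"
    unfolding RP_def bitn_def lenc_def fdn_def
    by (rule prc_rules2 prc_ind_mem[OF dR] prc_clk2 | (simp; fail))+
  then show ?thesis unfolding decidable_set_def computable_prc
    by (rule prc_cong) (simp add: ind_def)
qed


definition GZ :: "nat set \<Rightarrow> nat \<Rightarrow> nat set \<Rightarrow> nat \<Rightarrow> nat \<Rightarrow> bool" where
 "GZ R J Z n r \<longleftrightarrow> r < 2^n \<and> (\<forall>j<Suc n. r mod 2^j + 2^j \<in> R) \<and> (\<forall>i<n. bitn r i \<longrightarrow> i \<in> Z) \<and>
    wr {i. i < n \<and> i \<in> Z \<and> \<not> bitn r i} \<le> (1/2)^J"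

lemma sum_ind_filter: "(\<Sum>i<(n::nat). ind (P i) * (f i::nat)) = (\<Sum>i\<in>{i. i < n \<and> P i}. f i)"
proof -
  have "(\<Sum>i<n. ind (P i) * f i) = (\<Sum>i<n. if P i then f i else 0)" by (intro sum.cong) (auto simp: ind_def)
  also have "\<dots> = (\<Sum>i\<in>{i\<in>{..<n}. P i}. f i)" by (rule sum.inter_filter[symmetric]) simp
  also have "{i\<in>{..<n}. P i} = {i. i < n \<and> P i}" by auto
  finally show ?thesis .
qed

lemma RP_code: "RP R J L t K p (str_code (prefix_of Z n)) \<longleftrightarrow>
   (\<exists>r. GZ R J Z n r) \<and> (\<forall>i<n. i \<in> Z \<and> i < L \<longrightarrow> bitn t i) \<and>
   (\<forall>i<n. K \<le> i \<and> (\<exists>s<Suc n. clk p s [i] \<noteq> None) \<longrightarrow> i \<in> Z)"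
proof -
  let ?c = "2^n + NZ Z n"
  have lc: "lenc ?c = n" by (rule lenc_code)
  have bc: "\<And>i. i < n \<Longrightarrow> bitn ?c i \<longleftrightarrow> i \<in> Z" by (rule bitn_code)
  have w: "(\<Sum>i<n. ind (bitn ?c i \<and> \<not> bitn r i) * 2^(n + J - fdn i)) \<le> 2^n \<longleftrightarrow>
      wr {i. i < n \<and> i \<in> Z \<and> \<not> bitn r i} \<le> (1/2)^J" for r
  proof -
    have "(\<Sum>i<n. ind (bitn ?c i \<and> \<not> bitn r i) * 2^(n + J - fdn i)) =
       (\<Sum>i\<in>{i. i < n \<and> (bitn ?c i \<and> \<not> bitn r i)}. 2^(n + J - fdn i))" by (rule sum_ind_filter)
    also have "{i. i < n \<and> (bitn ?c i \<and> \<not> bitn r i)} = {i. i < n \<and> i \<in> Z \<and> \<not> bitn r i}" using bc by auto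
    also have "(\<Sum>i\<in>{i. i < n \<and> i \<in> Z \<and> \<not> bitn r i}. (2::nat)^(n + J - fdn i)) =
       (\<Sum>i\<in>{i. i < n \<and> i \<in> Z \<and> \<not> bitn r i}. 2^(n + J - fd i))" by (simp add: fdn_eq)
    finally have eq: "(\<Sum>i<n. ind (bitn ?c i \<and> \<not> bitn r i) * 2^(n + J - fdn i)) =
       (\<Sum>i\<in>{i. i < n \<and> i \<in> Z \<and> \<not> bitn r i}. 2^(n + J - fd i))" .
    show ?thesis unfolding eq by (rule weight_scale) auto
  qed
  have e: "(0 < enc (clk p s [i])) \<longleftrightarrow> clk p s [i] \<noteq> None" for s i by (rule enc_pos)
  have A: "(\<exists>r<2^n. (\<forall>j<Suc n. r mod 2^j + 2^j \<in> R) \<and> (\<forall>i<n. bitn r i \<longrightarrow> bitn ?c i) \<and>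
     (\<Sum>i<n. ind (bitn ?c i \<and> \<not> bitn r i) * 2^(n + J - fdn i)) \<le> 2^n) \<longleftrightarrow> (\<exists>r. GZ R J Z n r)"
  proof
    assume "\<exists>r<2^n. (\<forall>j<Suc n. r mod 2^j + 2^j \<in> R) \<and> (\<forall>i<n. bitn r i \<longrightarrow> bitn ?c i) \<and>
     (\<Sum>i<n. ind (bitn ?c i \<and> \<not> bitn r i) * 2^(n + J - fdn i)) \<le> 2^n"
    then obtain r where r: "r < 2^n" "\<forall>j<Suc n. r mod 2^j + 2^j \<in> R" "\<forall>i<n. bitn r i \<longrightarrow> bitn ?c i"
      "(\<Sum>i<n. ind (bitn ?c i \<and> \<not> bitn r i) * 2^(n + J - fdn i)) \<le> 2^n" by blast
    have "\<forall>i<n. bitn r i \<longrightarrow> i \<in> Z" using r(3) bc by blast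
    moreover have "wr {i. i < n \<and> i \<in> Z \<and> \<not> bitn r i} \<le> (1/2)^J" using r(4) w by blast
    ultimately have "GZ R J Z n r" using r(1,2) unfolding GZ_def by blast
    then show "\<exists>r. GZ R J Z n r" by blast
  next
    assume "\<exists>r. GZ R J Z n r"
    then obtain r where r: "r < 2^n" "\<forall>j<Suc n. r mod 2^j + 2^j \<in> R" "\<forall>i<n. bitn r i \<longrightarrow> i \<in> Z"
      "wr {i. i < n \<and> i \<in> Z \<and> \<not> bitn r i} \<le> (1/2)^J" unfolding GZ_def by blast
    have "\<forall>i<n. bitn r i \<longrightarrow> bitn ?c i" using r(3) bc by blast
    moreover have "(\<Sum>i<n. ind (bitn ?c i \<and> \<not> bitn r i) * 2^(n + J - fdn i)) \<le> 2^n" using r(4) w by blast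
    ultimately show "\<exists>r<2^n. (\<forall>j<Suc n. r mod 2^j + 2^j \<in> R) \<and> (\<forall>i<n. bitn r i \<longrightarrow> bitn ?c i) \<and>
     (\<Sum>i<n. ind (bitn ?c i \<and> \<not> bitn r i) * 2^(n + J - fdn i)) \<le> 2^n" using r(1,2) by blast
  qed
  have B: "(\<forall>i<n. bitn ?c i \<and> i < L \<longrightarrow> bitn t i) \<longleftrightarrow> (\<forall>i<n. i \<in> Z \<and> i < L \<longrightarrow> bitn t i)"
    using bc by blast
  have C: "(\<forall>i<n. K \<le> i \<and> (\<exists>s<Suc n. 0 < enc (clk p s [i])) \<longrightarrow> bitn ?c i) \<longleftrightarrow>
     (\<forall>i<n. K \<le> i \<and> (\<exists>s<Suc n. clk p s [i] \<noteq> None) \<longrightarrow> i \<in> Z)"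
    using bc e by blast
  show ?thesis unfolding str_code_prefix RP_def lc A B C ..
qed

lemma GZ_pre: assumes "GZ R J Z n r" "m \<le> n" shows "GZ R J Z m (r mod 2^m)"
  unfolding GZ_def
proof (intro conjI allI impI)
  show "r mod 2^m < 2^m" by simp
  fix j assume "j < Suc m"
  then have "r mod 2^m mod 2^j = r mod 2^j" by (intro mod_mod_pow) simp
  moreover have "j < Suc n" using \<open>j < Suc m\<close> assms(2) by simp
  ultimately show "r mod 2^m mod 2^j + 2^j \<in> R" using assms(1) unfolding GZ_def by simp
next
  fix i assume "i < m" "bitn (r mod 2^m) i"
  then have "bitn r i" "i < n" using assms(2) bitn_mod[of i m r] by auto
  then show "i \<in> Z" using assms(1) unfolding GZ_def by blast
next
  have "{i. i < m \<and> i \<in> Z \<and> \<not> bitn (r mod 2^m) i} \<subseteq> {i. i < n \<and> i \<in> Z \<and> \<not> bitn r i}"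
  proof
    fix i assume "i \<in> {i. i < m \<and> i \<in> Z \<and> \<not> bitn (r mod 2^m) i}"
    then show "i \<in> {i. i < n \<and> i \<in> Z \<and> \<not> bitn r i}" using assms(2) bitn_mod[of i m r] by auto
  qed
  then have "wr {i. i < m \<and> i \<in> Z \<and> \<not> bitn (r mod 2^m) i} \<le> wr {i. i < n \<and> i \<in> Z \<and> \<not> bitn r i}"
    by (intro wr_mono) auto
  then show "wr {i. i < m \<and> i \<in> Z \<and> \<not> bitn (r mod 2^m) i} \<le> (1/2)^J" using assms(1) unfolding GZ_def by linarith
qed

lemma GZ_X: assumes "\<forall>m. GZ R J Z m (NZ X m)"
  shows "(\<forall>n. str_code (prefix_of X n) \<in> R) \<and> X \<subseteq> Z \<and> wt (Z - X) \<le> ennreal ((1/2)^J)"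
proof (intro conjI allI)
  fix n
  have "NZ X n mod 2^n + 2^n \<in> R" using assms unfolding GZ_def by blast
  then show "str_code (prefix_of X n) \<in> R" using NZ_less[of X n] by (simp add: str_code_prefix add.commute)
next
  show "X \<subseteq> Z"
  proof
    fix i assume "i \<in> X"
    then have "bitn (NZ X (Suc i)) i" using bitn_NZ[of i "Suc i" X] by simp
    then show "i \<in> Z" using assms unfolding GZ_def by blast
  qed
next
  show "wt (Z - X) \<le> ennreal ((1/2)^J)"
  proof (rule wt_le_bound)
    fix m
    have "(Z - X) \<inter> {..<m} = {i. i < m \<and> i \<in> Z \<and> \<not> bitn (NZ X m) i}" using bitn_NZ[of _ m X] by auto
    then show "wr ((Z - X) \<inter> {..<m}) \<le> (1/2)^J" using assms unfolding GZ_def by simp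
  qed
qed

lemma GZ_koenig: assumes "\<forall>n. \<exists>r. GZ R J Z n r" shows "\<exists>X. \<forall>m. GZ R J Z m (NZ X m)"
proof (rule koenig)
  show "\<And>n r. GZ R J Z n r \<Longrightarrow> r < 2^n" by (simp add: GZ_def)
  show "\<And>n r m. GZ R J Z n r \<Longrightarrow> m \<le> n \<Longrightarrow> GZ R J Z m (r mod 2^m)" by (rule GZ_pre)
  show "\<And>n. \<exists>r. GZ R J Z n r" using assms by blast
qed

lemma tau_prefix: "\<tau> = prefix_of (strset \<tau>) (length \<tau>)"
  unfolding prefix_of_def strset_def by (rule nth_equalityI) auto

lemma bitn_tau: "i < length \<tau> \<Longrightarrow> bitn (str_code \<tau>) i \<longleftrightarrow> i \<in> strset \<tau>"
  using bitn_code[of i "length \<tau>" "strset \<tau>"] tau_prefix[of \<tau>] by (metis str_code_prefix)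

lemma finite_strset: "finite (strset \<tau>)"
  unfolding strset_def by simp

lemma strset_sub: "strset \<tau> \<subseteq> {..<length \<tau>}"
  unfolding strset_def by auto

lemma ee_le: "0 \<le> c \<Longrightarrow> enn2ereal x \<le> ereal c \<longleftrightarrow> x \<le> ennreal c"
  by (metis enn2ereal_ennreal less_eq_ennreal.rep_eq)

lemma ee_lt: "0 \<le> c \<Longrightarrow> enn2ereal x < ereal c \<longleftrightarrow> x < ennreal c"
  by (metis enn2ereal_ennreal less_ennreal.rep_eq)

lemma comp_real_shift:
  assumes "computable_real a"
  shows "computable_real (a - (1/2)^J)"
proof -
  obtain f g h where cf: "computable f" and cg: "computable g" and ch: "computable h"
    and bd: "\<forall>n. \<bar>a - (real (f n) - real (g n)) / real (h n + 1)\<bar> \<le> 1 / 2 ^ n"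
    using assms unfolding computable_real_def by blast
  define P where "P = (2::nat)^J"
  define f' where "f' n = P * f n" for n
  define g' where "g' n = P * g n + (h n + 1)" for n
  define h' where "h' n = P * (h n + 1) - 1" for n
  have pf: "prc 1 (\<lambda>xs. f (hd xs))" and pg: "prc 1 (\<lambda>xs. g (hd xs))" and ph: "prc 1 (\<lambda>xs. h (hd xs))"
    using cf cg ch by (simp_all add: computable_prc)
  have "computable f'" unfolding computable_prc f'_def by (intro prc_mult prc_const pf)
  moreover have "computable g'" unfolding computable_prc g'_def by (intro prc_add prc_mult prc_const pg ph)
  moreover have "computable h'" unfolding computable_prc h'_def
    by (intro prc_monus prc_mult prc_add prc_const ph)
  moreover have "\<bar>(a - (1/2)^J) - (real (f' n) - real (g' n)) / real (h' n + 1)\<bar> \<le> 1 / 2 ^ n" for n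
  proof -
    have "0 < P" unfolding P_def by simp
    then have P1: "1 \<le> P * (h n + 1)" by simp
    have rP: "real P = 2^J" unfolding P_def by simp
    have "real (h' n + 1) = real P * real (h n + 1)" unfolding h'_def using P1 by (simp add: of_nat_diff algebra_simps)
    moreover have "real (f' n) - real (g' n) = real P * (real (f n) - real (g n)) - real (h n + 1)"
      unfolding f'_def g'_def by (simp add: algebra_simps)
    ultimately have "(real (f' n) - real (g' n)) / real (h' n + 1) = (real (f n) - real (g n)) / real (h n + 1) - (1/2)^J"
      using rP by (simp add: field_simps)
    then show ?thesis using bd by simp
  qed
  ultimately show ?thesis unfolding computable_real_def by blast
qed

theorem lemma2p5:
  fixes \<tau> :: "bool list" and Q :: "nat set set" and a :: real and D :: "nat set"
  assumes "is_condition \<tau> Q a"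
    and "ce D"
    and "wt D < \<infinity>"
  shows "\<exists>Q' a'. is_condition \<tau> Q' a' \<and> candidates \<tau> Q' a' \<subseteq> candidates \<tau> Q a \<and>
           (\<forall>Y\<in>candidates \<tau> Q' a'. finite (D - Y))"
proof -
  define T where "T = strset \<tau>"
  define L where "L = length \<tau>"
  from assms(1) have PQ: "Pi01_class Q" and wQ: "wt_class Q < \<infinity>" and ca: "computable_real a"
    and hQ: "\<forall>X\<in>Q. X \<inter> {..<L} \<subseteq> T \<and> enn2ereal (wt (T - X)) < ereal a"
    unfolding is_condition_def T_def L_def by auto
  obtain R where dR: "decidable_set R" and Qdef: "Q = {X. \<forall>n. str_code (prefix_of X n) \<in> R}"
    using PQ unfolding Pi01_class_def by auto
  obtain X0 where X0: "X0 \<in> Q" "wt X0 < \<infinity>" using wQ unfolding wt_class_def by (auto simp: INF_less_iff)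
  obtain p where p: "\<And>n. n \<in> D \<longleftrightarrow> (\<exists>v. evalr p [n] v)" using assms(2) unfolding ce_def by auto
  have finT: "finite T" unfolding T_def by (rule finite_strset)
  have wrT: "wr (T - X) < a" if "X \<in> Q" for X
  proof -
    have "wt (T - X) = ennreal (wr (T - X))" using finT by (intro wt_finite) auto
    then have "ereal (wr (T - X)) < ereal a" using hQ that wr_nonneg by auto
    then show ?thesis by simp
  qed
  define V where "V = (\<lambda>X. wr (T - X)) ` Q"
  have finV: "finite V"
  proof (rule finite_subset)
    show "V \<subseteq> wr ` Pow T" unfolding V_def by auto
    show "finite (wr ` Pow T)" using finT by simp
  qed
  have VnE: "V \<noteq> {}" unfolding V_def using X0 by auto
  define M where "M = Max V"
  have MX: "wr (T - X) \<le> M" if "X \<in> Q" for X unfolding M_def V_def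
    using finV that V_def by (intro Max_ge) auto
  have Ma: "M < a" unfolding M_def using Max_in[OF finV VnE] wrT unfolding V_def by auto
  have M0: "0 \<le> M" using MX[OF X0(1)] wr_nonneg[of "T - X0"] by linarith
  obtain J where J: "(1/2::real)^J < a - M" using real_arch_pow_inv[of "a - M" "1/2"] Ma by auto
  define \<delta> where "\<delta> = (1/2::real)^J"
  have \<delta>0: "0 < \<delta>" unfolding \<delta>_def by simp
  define a' where "a' = a - \<delta>"
  have a'M: "M < a'" using J unfolding a'_def \<delta>_def by linarith
  have a'0: "0 \<le> a'" using a'M M0 by linarith
  obtain K0 where K0: "wt (D \<inter> {K0..}) \<le> ennreal \<delta>" using wt_tail[OF assms(3) \<delta>0] by blast
  define K where "K = max K0 L"
  define D' where "D' = D \<inter> {K..}"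
  have "D' \<subseteq> D \<inter> {K0..}" unfolding D'_def K_def by auto
  then have wD': "wt D' \<le> ennreal \<delta>" using wt_mono K0 order_trans by blast
  define t where "t = str_code \<tau>"
  define R' where "R' = {c. RP R J L t K p c}"
  define Q' where "Q' = {Z. \<forall>n. str_code (prefix_of Z n) \<in> R'}"
  have Q'iff: "Z \<in> Q' \<longleftrightarrow> (\<forall>n. (\<exists>r. GZ R J Z n r) \<and> (\<forall>i<n. i \<in> Z \<and> i < L \<longrightarrow> bitn t i) \<and>
      (\<forall>i<n. K \<le> i \<and> (\<exists>s<Suc n. clk p s [i] \<noteq> None) \<longrightarrow> i \<in> Z))" for Z
    unfolding Q'_def R'_def mem_Collect_eq RP_code ..
  have Q'prop: "(\<exists>X\<in>Q. X \<subseteq> Z \<and> wt (Z - X) \<le> ennreal \<delta>) \<and> Z \<inter> {..<L} \<subseteq> T \<and> D' \<subseteq> Z"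
    if Z: "Z \<in> Q'" for Z
  proof (intro conjI)
    have all: "\<forall>n. (\<exists>r. GZ R J Z n r) \<and> (\<forall>i<n. i \<in> Z \<and> i < L \<longrightarrow> bitn t i) \<and>
      (\<forall>i<n. K \<le> i \<and> (\<exists>s<Suc n. clk p s [i] \<noteq> None) \<longrightarrow> i \<in> Z)" using Z Q'iff by blast
    then obtain X where X: "\<forall>m. GZ R J Z m (NZ X m)" using GZ_koenig[of R J Z] by blast
    from GZ_X[OF X] show "\<exists>X\<in>Q. X \<subseteq> Z \<and> wt (Z - X) \<le> ennreal \<delta>" unfolding Qdef \<delta>_def by blast
    show "Z \<inter> {..<L} \<subseteq> T"
    proof
      fix i assume "i \<in> Z \<inter> {..<L}"
      then have "i \<in> Z" "i < L" by auto
      then have "bitn t i" using all[rule_format, of "Suc i"] by blast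
      then show "i \<in> T" using bitn_tau \<open>i < L\<close> unfolding t_def T_def L_def by blast
    qed
    show "D' \<subseteq> Z"
    proof
      fix i assume "i \<in> D'"
      then have "i \<in> D" "K \<le> i" unfolding D'_def by auto
      then obtain v where "evalr p [i] v" using p by blast
      then obtain s where s: "clk p s [i] = Some v" using clk_complete by blast
      let ?n = "Suc (max i s)"
      have "i < ?n" "s < Suc ?n" by auto
      then show "i \<in> Z" using all[rule_format, of ?n] \<open>K \<le> i\<close> s by blast
    qed
  qed
  define Z0 where "Z0 = X0 \<union> D'"
  have Z0Q': "Z0 \<in> Q'"
    unfolding Q'iff
  proof (rule allI, intro conjI)
    fix n
    show "\<exists>r. GZ R J Z0 n r"
    proof (intro exI)
      show "GZ R J Z0 n (NZ X0 n)" unfolding GZ_def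
      proof (intro conjI allI impI)
        show "NZ X0 n < 2^n" by (rule NZ_less)
        fix j assume "j < Suc n"
        then have "NZ X0 n mod 2^j = NZ X0 j" by (intro NZ_mod) simp
        moreover have "str_code (prefix_of X0 j) \<in> R" using X0(1) unfolding Qdef by blast
        ultimately show "NZ X0 n mod 2^j + 2^j \<in> R" by (simp add: str_code_prefix add.commute)
      next
        fix i assume "i < n" "bitn (NZ X0 n) i"
        then show "i \<in> Z0" using bitn_NZ unfolding Z0_def by blast
      next
        have sub: "{i. i < n \<and> i \<in> Z0 \<and> \<not> bitn (NZ X0 n) i} \<subseteq> D' \<inter> {..<n}"
          using bitn_NZ[of _ n X0] unfolding Z0_def by auto
        have "wr {i. i < n \<and> i \<in> Z0 \<and> \<not> bitn (NZ X0 n) i} \<le> wr (D' \<inter> {..<n})"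
          by (rule wr_mono[OF _ sub]) simp
        moreover have "ennreal (wr (D' \<inter> {..<n})) \<le> ennreal \<delta>"
          using wr_le_wt[of "D' \<inter> {..<n}" D'] wD' by auto
        then have "wr (D' \<inter> {..<n}) \<le> \<delta>" using \<delta>0 by simp
        ultimately show "wr {i. i < n \<and> i \<in> Z0 \<and> \<not> bitn (NZ X0 n) i} \<le> (1/2)^J" unfolding \<delta>_def by linarith
      qed
    qed
    show "\<forall>i<n. i \<in> Z0 \<and> i < L \<longrightarrow> bitn t i"
    proof (intro allI impI)
      fix i assume "i < n" "i \<in> Z0 \<and> i < L"
      then have "i \<in> X0" unfolding Z0_def D'_def K_def by auto
      then have "i \<in> T" using hQ X0(1) \<open>i \<in> Z0 \<and> i < L\<close> by blast
      then show "bitn t i" using bitn_tau \<open>i \<in> Z0 \<and> i < L\<close> unfolding t_def T_def L_def by blast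
    qed
    show "\<forall>i<n. K \<le> i \<and> (\<exists>s<Suc n. clk p s [i] \<noteq> None) \<longrightarrow> i \<in> Z0"
    proof (intro allI impI)
      fix i assume a: "i < n" "K \<le> i \<and> (\<exists>s<Suc n. clk p s [i] \<noteq> None)"
      then obtain s v where "clk p s [i] = Some v" by blast
      then have "evalr p [i] v" by (rule clk_sound)
      then have "i \<in> D" using p by blast
      then show "i \<in> Z0" using a unfolding Z0_def D'_def by blast
    qed
  qed
  show ?thesis
  proof (intro exI conjI)
    show "is_condition \<tau> Q' a'" unfolding is_condition_def
    proof (intro conjI ballI)
      show "Pi01_class Q'" unfolding Pi01_class_def Q'_def R'_def using RP_dec[OF dR] by blast
      have "wt_class Q' \<le> wt Z0" unfolding wt_class_def using Z0Q' by (rule INF_lower)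
      also have "\<dots> \<le> wt X0 + wt D'" unfolding Z0_def by (rule wt_union)
      also have "\<dots> < \<infinity>" using X0(2) wD' by (simp add: le_less_trans[OF wD'])
      finally show "wt_class Q' < \<infinity>" .
      show "computable_real a'" unfolding a'_def \<delta>_def by (rule comp_real_shift[OF ca])
      fix Z assume Z: "Z \<in> Q'"
      show "Z \<inter> {..<length \<tau>} \<subseteq> strset \<tau>" using Q'prop[OF Z] unfolding L_def T_def by blast
      obtain X where X: "X \<in> Q" "X \<subseteq> Z" using Q'prop[OF Z] by blast
      have "wr (T - Z) \<le> wr (T - X)" using X(2) finT by (intro wr_mono) auto
      then have "wr (T - Z) < a'" using MX[OF X(1)] a'M by linarith
      moreover have "wt (T - Z) = ennreal (wr (T - Z))" using finT by (intro wt_finite) auto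
      ultimately show "enn2ereal (wt (strset \<tau> - Z)) < ereal a'" unfolding T_def using wr_nonneg by simp
    qed
    show "candidates \<tau> Q' a' \<subseteq> candidates \<tau> Q a"
    proof
      fix Y assume "Y \<in> candidates \<tau> Q' a'"
      then obtain Z where Y: "extends_str Y \<tau>" "Z \<in> Q'" "Z \<subseteq> Y" "enn2ereal (wt (Y - Z)) \<le> ereal a'"
        unfolding candidates_def by blast
      obtain X where X: "X \<in> Q" "X \<subseteq> Z" "wt (Z - X) \<le> ennreal \<delta>" using Q'prop[OF Y(2)] by blast
      have "wt (Y - Z) \<le> ennreal a'" using Y(4) ee_le[OF a'0] by blast
      have "wt (Y - X) \<le> wt ((Y - Z) \<union> (Z - X))" by (rule wt_mono) auto
      also have "\<dots> \<le> wt (Y - Z) + wt (Z - X)" by (rule wt_union)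
      also have "\<dots> \<le> ennreal a' + ennreal \<delta>" by (rule add_mono) fact+
      also have "\<dots> = ennreal a" unfolding a'_def using a'0 \<delta>0 a'_def by (simp flip: ennreal_plus)
      finally have "enn2ereal (wt (Y - X)) \<le> ereal a" using ee_le[of a] a'0 \<delta>0 unfolding a'_def by simp
      then show "Y \<in> candidates \<tau> Q a" unfolding candidates_def using Y X by blast
    qed
    show "\<forall>Y\<in>candidates \<tau> Q' a'. finite (D - Y)"
    proof
      fix Y assume "Y \<in> candidates \<tau> Q' a'"
      then obtain Z where Y: "Z \<in> Q'" "Z \<subseteq> Y" unfolding candidates_def by blast
      have "D - Y \<subseteq> {..<K}" using Q'prop[OF Y(1)] Y(2) unfolding D'_def by fastforce
      then show "finite (D - Y)" by (rule finite_subset) simp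
    qed
  qed
qed

end
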